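(* Let $d\ge3$ and let $u\in\mathbb{R}^d$. For all sufficiently small $\beta>0$, every finite $\Lambda\subset\mathbb{Z}^d$ and every disorder configuration $\xi\in\mathbb{R}^{\mathbb{Z}^d}$, $$F_{\beta,u,\Lambda}[\xi_\Lambda]\le-|\Lambda|\Big(\sigma^{A-\beta}_\Lambda-\sigma^{C_2/2}_\Lambda\Big)+\sum_{x,y\in\Lambda\cup\partial\Lambda,|x-y|=1}(B+V(0))-\frac{A-\beta-C_2/2}{2}\sum_{x,y\in\Lambda\cup\partial\Lambda,|x-y|=1}((x-y)\cdot u)^2+\frac12\Big(\frac1{A-\beta}-\frac2{C_2}\Big)\langle\xi,G_\Lambda\xi\rangle_\Lambda.$$
   Context: $V\in C^2(\mathbb{R})$ is even, with $V(s)\ge As^2-B$ for all $s$ (some $A>0$, $B\in\mathbb{R}$) and $V''(s)\le C_2$ (some $C_2>0$). For finite $\Lambda\subset\mathbb{Z}^d$, $\partial\Lambda=\{x\notin\Lambda:\|x-y\|_1=1\text{ for some }y\in\Lambda\}$; all sums over "$x,y$ with $|x-y|=1$" run over ordered nearest-neighbour pairs. For $\psi\in\mathbb{R}^{\mathbb{Z}^d}$, $$H^\psi_\Lambda[\xi](\phi)=\tfrac12\sum_{x,y\in\Lambda,|x-y|=1}V(\phi(x)-\phi(y))+\sum_{x\in\Lambda,y\in\partial\Lambda,|x-y|=1}V(\phi(x)-\psi(y))+\tfrac12\sum_{x\in\Lambda}\xi(x)\phi(x),$$ and $\nu^\psi_\Lambda[\xi](\mathrm{d}\phi)=\frac1Ze^{-H^\psi_\Lambda[\xi](\phi)}\prod_{x\in\Lambda}\mathrm{d}\phi(x)\prod_{x\notin\Lambda}\delta_{\psi(x)}(\mathrm{d}\phi(x))$.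 With $\psi_u(x)=x\cdot u$, $$F_{\beta,u,\Lambda}[\xi_\Lambda]=\log\int\nu^{\psi_u}_\Lambda[\xi](\mathrm{d}\phi)\exp\Big(\frac\beta2\sum_{x,y\in\mathbb{Z}^d,|x-y|=1}(\phi(x)-\phi(y)-u\cdot(x-y))^2\Big).$$ For $c>0$, $\sigma^c_\Lambda=-\frac1{|\Lambda|}\log\int_{\mathbb{R}^\Lambda}\exp\big(-\frac c2\sum_{x,y\in\Lambda,|x-y|=1}(\phi(x)-\phi(y))^2-c\sum_{x\in\Lambda,y\in\partial\Lambda,|x-y|=1}\phi(x)^2\big)\prod_{x\in\Lambda}\mathrm{d}\phi(x)$ (the surface tension of the model without disorder, potential $V(s)=cs^2$, tilt $0$). $G_\Lambda(x,y)$ is the Green's function: the expected number of visits to $y$ by a simple random walk started at $x$ before its first exit from $\Lambda$; $\langle\xi,G_\Lambda\xi\rangle_\Lambda=\sum_{x,y\in\Lambda}\xi(x)G_\Lambda(x,y)\xi(y)$. *)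

theory Defs
  imports "HOL-Analysis.Analysis"
begin

text \<open>Sites of Z^d are vectors int^'d; the dimension d is CARD('d).\<close>

definition l1dist :: "int^'d \<Rightarrow> int^'d \<Rightarrow> int" where
  "l1dist x y = (\<Sum>i\<in>UNIV. \<bar>x$i - y$i\<bar>)"

definition nbr :: "int^'d \<Rightarrow> int^'d \<Rightarrow> bool" where
  "nbr x y \<longleftrightarrow> l1dist x y = 1"

definition nnpairs :: "(int^'d) set \<Rightarrow> ((int^'d) \<times> (int^'d)) set" where
  "nnpairs S = {(x,y). x \<in> S \<and> y \<in> S \<and> nbr x y}"

definition bdry :: "(int^'d) set \<Rightarrow> (int^'d) set" where
  "bdry \<Lambda> = {x. x \<notin> \<Lambda> \<and> (\<exists>y\<in>\<Lambda>. nbr x y)}"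

definition zdot :: "int^'d \<Rightarrow> real^'d \<Rightarrow> real" where
  "zdot x u = (\<Sum>i\<in>UNIV. real_of_int (x$i) * u$i)"

definition tilt :: "real^'d \<Rightarrow> int^'d \<Rightarrow> real" where
  "tilt u = (\<lambda>x. zdot x u)"

definition glue :: "(int^'d) set \<Rightarrow> (int^'d \<Rightarrow> real) \<Rightarrow> (int^'d \<Rightarrow> real) \<Rightarrow> int^'d \<Rightarrow> real" where
  "glue \<Lambda> \<phi> \<psi> = (\<lambda>x. if x \<in> \<Lambda> then \<phi> x else \<psi> x)"

definition hamiltonian ::
  "(real \<Rightarrow> real) \<Rightarrow> (int^'d) set \<Rightarrow> (int^'d \<Rightarrow> real) \<Rightarrow> (int^'d \<Rightarrow> real) \<Rightarrow> (int^'d \<Rightarrow> real) \<Rightarrow> real" where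
  "hamiltonian V \<Lambda> \<psi> \<xi> \<phi> =
     1/2 * (\<Sum>(x,y)\<in>nnpairs \<Lambda>. V (\<phi> x - \<phi> y))
     + (\<Sum>(x,y)\<in>{(x,y). x \<in> \<Lambda> \<and> y \<in> bdry \<Lambda> \<and> nbr x y}. V (\<phi> x - \<psi> y))
     + 1/2 * (\<Sum>x\<in>\<Lambda>. \<xi> x * \<phi> x)"

definition fieldM :: "(int^'d) set \<Rightarrow> (int^'d \<Rightarrow> real) measure" where
  "fieldM \<Lambda> = PiM \<Lambda> (\<lambda>_. lborel)"

definition grad_energy :: "real^'d \<Rightarrow> (int^'d \<Rightarrow> real) \<Rightarrow> real" where
  "grad_energy u f = infsum (\<lambda>(x,y). (f x - f y - zdot (x - y) u)^2) {(x,y). nbr x y}"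

definition free_energy ::
  "(real \<Rightarrow> real) \<Rightarrow> real \<Rightarrow> real^'d \<Rightarrow> (int^'d) set \<Rightarrow> (int^'d \<Rightarrow> real) \<Rightarrow> real" where
  "free_energy V \<beta> u \<Lambda> \<xi> =
     ln ((integral\<^sup>L (fieldM \<Lambda>)
            (\<lambda>\<phi>. exp (- hamiltonian V \<Lambda> (tilt u) \<xi> \<phi>)
                  * exp (\<beta> / 2 * grad_energy u (glue \<Lambda> \<phi> (tilt u)))))
         / integral\<^sup>L (fieldM \<Lambda>) (\<lambda>\<phi>. exp (- hamiltonian V \<Lambda> (tilt u) \<xi> \<phi>)))"

text \<open>Surface tension of the Gaussian model with potential c s^2, tilt 0.\<close>
definition sigma :: "real \<Rightarrow> (int^'d) set \<Rightarrow> real" where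
  "sigma c \<Lambda> = - (1 / real (card \<Lambda>)) *
     ln (integral\<^sup>L (fieldM \<Lambda>)
          (\<lambda>\<phi>. exp (- (c/2) * (\<Sum>(x,y)\<in>nnpairs \<Lambda>. (\<phi> x - \<phi> y)^2)
                     - c * (\<Sum>(x,y)\<in>{(x,y). x \<in> \<Lambda> \<and> y \<in> bdry \<Lambda> \<and> nbr x y}. (\<phi> x)^2))))"

text \<open>walkP L n x y: probability that simple random walk from x is at y at time n
  and has stayed in L at all times 0..n.\<close>
fun walkP :: "(int^'d) set \<Rightarrow> nat \<Rightarrow> int^'d \<Rightarrow> int^'d \<Rightarrow> real" where
  "walkP \<Lambda> 0 x y = (if x \<in> \<Lambda> \<and> x = y then 1 else 0)"
| "walkP \<Lambda> (Suc n) x y =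
     (if x \<in> \<Lambda> then (\<Sum>z\<in>{z\<in>\<Lambda>. nbr x z}. walkP \<Lambda> n z y) / real (2 * CARD('d)) else 0)"

text \<open>Green's function: expected number of visits to y before exiting L (times 0,1,2,...).\<close>
definition green :: "(int^'d) set \<Rightarrow> int^'d \<Rightarrow> int^'d \<Rightarrow> real" where
  "green \<Lambda> x y = (\<Sum>n. walkP \<Lambda> n x y)"

definition green_form :: "(int^'d) set \<Rightarrow> (int^'d \<Rightarrow> real) \<Rightarrow> real" where
  "green_form \<Lambda> \<xi> = (\<Sum>x\<in>\<Lambda>. \<Sum>y\<in>\<Lambda>. \<xi> x * green \<Lambda> x y * \<xi> y)"

end

theory Submission
  imports Defs "HOL-Probability.Distributions"
begin


definition nset :: "int^'d \<Rightarrow> (int^'d) set" where "nset x = {y. nbr x y}"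
definition Dset :: "(int^'d) set" where "Dset = {v. (\<Sum>i\<in>UNIV. \<bar>v$i\<bar>) = 1}"

lemma nbr_sym: "nbr x y \<longleftrightarrow> nbr y x"
  unfolding nbr_def l1dist_def by (simp add: abs_minus_commute)

lemma nbr_iff: "nbr x y \<longleftrightarrow> y - x \<in> Dset"
  unfolding nbr_def l1dist_def Dset_def by (simp add: abs_minus_commute)

lemma Dset_char: "Dset = (\<lambda>(i,s). axis i s) ` (UNIV \<times> {1,-1::int})"
proof (intro set_eqI iffI)
  fix v :: "int^'d" assume v: "v \<in> Dset"
  hence s: "(\<Sum>i\<in>UNIV. \<bar>v$i\<bar>) = 1" by (simp add: Dset_def)
  obtain i where i: "v$i \<noteq> 0"
  proof (rule ccontr)
    assume "\<not> thesis" with that have "\<forall>i. v$i = 0" by blast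
    with s show False by simp
  qed
  have split: "(\<Sum>j\<in>UNIV. \<bar>v$j\<bar>) = \<bar>v$i\<bar> + (\<Sum>j\<in>UNIV-{i}. \<bar>v$j\<bar>)"
    by (simp add: sum.remove)
  have nn: "(\<Sum>j\<in>UNIV-{i}. \<bar>v$j\<bar>) \<ge> 0" by (simp add: sum_nonneg)
  have vi: "\<bar>v$i\<bar> = 1" using i s split nn by linarith
  hence rest: "(\<Sum>j\<in>UNIV-{i}. \<bar>v$j\<bar>) = 0" using s split by linarith
  hence "\<forall>j\<in>UNIV-{i}. \<bar>v$j\<bar> = 0" by (subst (asm) sum_nonneg_eq_0_iff) auto
  hence "v = axis i (v$i)" by (auto simp: vec_eq_iff axis_def)
  moreover have "v$i \<in> {1,-1}" using vi by auto
  ultimately show "v \<in> (\<lambda>(i,s). axis i s) ` (UNIV \<times> {1,-1::int})" by force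
next
  fix v :: "int^'d" assume "v \<in> (\<lambda>(i,s). axis i s) ` (UNIV \<times> {1,-1::int})"
  then obtain i s where v: "v = axis i s" "s \<in> {1,-1}" by auto
  have "(\<Sum>j\<in>UNIV. \<bar>v$j\<bar>) = (\<Sum>j\<in>UNIV. if j = i then 1 else 0)"
    using v by (intro sum.cong) (auto simp: axis_def)
  also have "\<dots> = 1" by simp
  finally show "v \<in> Dset" by (simp add: Dset_def)
qed

lemma axis_inj: "inj_on (\<lambda>(i,s). axis i s :: int^'d) (UNIV \<times> {1,-1::int})"
  by (auto simp: inj_on_def axis_eq_axis)

lemma card_Dset: "card (Dset :: (int^'d) set) = 2 * CARD('d)"
  unfolding Dset_char by (subst card_image[OF axis_inj]) (simp add: card_cartesian_product)

lemma finite_Dset: "finite Dset"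
  unfolding Dset_char by simp

lemma Dset_uminus: "v \<in> Dset \<Longrightarrow> - v \<in> Dset"
  by (simp add: Dset_def)

lemma nset_eq: "nset x = (\<lambda>v. x + v) ` Dset"
  unfolding nset_def nbr_iff by (auto simp: image_iff) (metis add.commute diff_add_cancel)

lemma finite_nset: "finite (nset x)"
  by (simp add: nset_eq finite_Dset)

lemma card_nset: "card (nset x :: (int^'d) set) = 2 * CARD('d)"
  by (simp add: nset_eq card_image inj_on_def card_Dset)

lemma sum_nset: "(\<Sum>y\<in>nset x. f y) = (\<Sum>v\<in>Dset. f (x + v))"
  by (simp add: nset_eq sum.reindex inj_on_def)

lemma sum_Dset_odd:
  assumes "\<And>v. g (- v) = - g v" shows "(\<Sum>v\<in>Dset. g v) = (0::real)"
proof -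
  have "(\<Sum>v\<in>Dset. g v) = (\<Sum>v\<in>uminus ` Dset. g v)"
  proof -
    have "uminus ` Dset = (Dset :: (int^'d) set)"
      by (auto simp: image_iff Dset_uminus) (metis Dset_uminus minus_minus)
    thus ?thesis by metis
  qed
  also have "\<dots> = (\<Sum>v\<in>Dset. g (- v))" by (simp add: sum.reindex inj_on_def)
  also have "\<dots> = - (\<Sum>v\<in>Dset. g v)" by (simp add: assms sum_negf)
  finally show ?thesis by simp
qed

lemma zdot_add: "zdot (x + y) u = zdot x u + zdot y u"
  by (simp add: zdot_def distrib_right sum.distrib)
lemma zdot_minus: "zdot (- x) u = - zdot x u"
  by (simp add: zdot_def sum_negf)
lemma zdot_diff: "zdot (x - y) u = zdot x u - zdot y u"
  by (metis diff_conv_add_uminus zdot_add zdot_minus)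

lemma bdry_nset: "x \<in> \<Lambda> \<Longrightarrow> nset x = (\<Lambda> \<inter> nset x) \<union> (bdry \<Lambda> \<inter> nset x)"
  by (auto simp: nset_def bdry_def nbr_sym)

lemma card_split: 
  fixes x :: "int^'d"
  assumes "x \<in> \<Lambda>" shows "real (card (\<Lambda> \<inter> nset x)) + real (card (bdry \<Lambda> \<inter> nset x)) = 2 * real CARD('d)"
proof -
  have "card (nset x) = card (\<Lambda> \<inter> nset x) + card (bdry \<Lambda> \<inter> nset x)"
    by (subst bdry_nset[OF assms], rule card_Un_disjoint) (auto simp: finite_nset bdry_def)
  thus ?thesis using card_nset[of x] by simp
qed

lemma sum_split_nset:
  assumes "x \<in> \<Lambda>" shows "(\<Sum>y\<in>nset x. f y) = (\<Sum>y\<in>\<Lambda> \<inter> nset x. f y) + (\<Sum>y\<in>bdry \<Lambda> \<inter> nset x. f y)"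
  by (subst bdry_nset[OF assms], rule sum.union_disjoint) (auto simp: finite_nset bdry_def)

lemma finite_bdry: "finite \<Lambda> \<Longrightarrow> finite (bdry \<Lambda>)"
proof -
  assume f: "finite \<Lambda>"
  have "bdry \<Lambda> \<subseteq> (\<Union>x\<in>\<Lambda>. nset x)" by (auto simp: bdry_def nset_def nbr_sym)
  thus ?thesis using f finite_nset by (meson finite_UN_I finite_subset)
qed



lemma finite_nbrs: "finite {z\<in>\<Lambda>. nbr x z}"
  by (rule finite_subset[OF _ finite_nset[of x]]) (auto simp: nset_def)

lemma nbrs_eq: "{z\<in>\<Lambda>. nbr x z} = \<Lambda> \<inter> nset x"
  by (auto simp: nset_def)

lemma dpos: "real (2 * CARD('d::finite)) > 0" by simp

lemma walkP_nonneg: "walkP \<Lambda> n x y \<ge> 0"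
  by (induction n arbitrary: x) (auto intro!: sum_nonneg divide_nonneg_pos)

lemma walkP_out: "y \<notin> \<Lambda> \<Longrightarrow> walkP \<Lambda> n x y = 0"
  by (induction n arbitrary: x) auto

lemma walkP_outx: "x \<notin> \<Lambda> \<Longrightarrow> walkP \<Lambda> n x y = 0"
  by (cases n) auto

lemma walkP_Suc_right:
  "walkP \<Lambda> (Suc n) x (y::int^'d) = (if y \<in> \<Lambda> then (\<Sum>z\<in>{z\<in>\<Lambda>. nbr y z}. walkP \<Lambda> n x z) / real (2 * CARD('d)) else 0)"
proof (induction n arbitrary: x)
  case 0
  have "(\<Sum>z\<in>{z\<in>\<Lambda>. nbr x z}. (if z \<in> \<Lambda> \<and> z = y then 1 else 0::real)) = (if y \<in> \<Lambda> \<and> nbr x y then 1 else 0)"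
    using finite_nbrs[of \<Lambda> x] by (simp add: sum.delta' conj_commute)
  moreover have "(\<Sum>z\<in>{z\<in>\<Lambda>. nbr y z}. (if x \<in> \<Lambda> \<and> x = z then 1 else 0::real)) = (if x \<in> \<Lambda> \<and> nbr y x then 1 else 0)"
    using finite_nbrs[of \<Lambda> y] by (cases "x \<in> \<Lambda>") (simp_all add: sum.delta)
  ultimately show ?case by (auto simp: nbr_sym)
next
  case (Suc n)
  have "walkP \<Lambda> (Suc (Suc n)) x y = (if x \<in> \<Lambda> then (\<Sum>z\<in>{z\<in>\<Lambda>. nbr x z}. walkP \<Lambda> (Suc n) z y) / real (2 * CARD('d)) else 0)"
    by simp
  also have "\<dots> = (if x \<in> \<Lambda> then (\<Sum>z\<in>{z\<in>\<Lambda>. nbr x z}. (if y \<in> \<Lambda> then (\<Sum>w\<in>{w\<in>\<Lambda>. nbr y w}. walkP \<Lambda> n z w) / real (2 * CARD('d)) else 0)) / real (2 * CARD('d)) else 0)"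
    by (simp only: Suc)
  also have "\<dots> = (if y \<in> \<Lambda> then (\<Sum>w\<in>{w\<in>\<Lambda>. nbr y w}. (if x \<in> \<Lambda> then (\<Sum>z\<in>{z\<in>\<Lambda>. nbr x z}. walkP \<Lambda> n z w) / real (2 * CARD('d)) else 0)) / real (2 * CARD('d)) else 0)"
    by (auto simp: sum_divide_distrib[symmetric] intro: sum.swap)
  also have "\<dots> = (if y \<in> \<Lambda> then (\<Sum>w\<in>{w\<in>\<Lambda>. nbr y w}. walkP \<Lambda> (Suc n) x w) / real (2 * CARD('d)) else 0)"
    by simp
  finally show ?case .
qed

lemma walkP_sym: "walkP \<Lambda> n x y = walkP \<Lambda> n y (x::int^'d)"
proof (induction n arbitrary: x y)
  case 0 thus ?case by auto
next
  case (Suc n)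
  have "walkP \<Lambda> (Suc n) x y = (if x\<in>\<Lambda> then (\<Sum>z\<in>{z\<in>\<Lambda>. nbr x z}. walkP \<Lambda> n y z)/real(2*CARD('d)) else 0)"
    by (simp add: Suc)
  also have "\<dots> = walkP \<Lambda> (Suc n) y x" by (rule walkP_Suc_right[symmetric])
  finally show ?case .
qed

text \<open>Lyapunov function\<close>
definition Rk :: "(int^'d) set \<Rightarrow> real" where
  "Rk \<Lambda> = (\<Sum>x\<in>\<Lambda>. real_of_int \<bar>x$(undefined::'d)\<bar> + 1)^2"
definition hL :: "(int^'d) set \<Rightarrow> int^'d \<Rightarrow> real" where
  "hL \<Lambda> y = Rk \<Lambda> - (real_of_int (y$(undefined::'d)))^2"

lemma hL_nonneg_nbr:
  assumes fin: "finite \<Lambda>" and x: "x \<in> \<Lambda>" and z: "z = x \<or> nbr x z"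
  shows "hL \<Lambda> z \<ge> 0"
proof -
  let ?k = "undefined::'d"
  have "\<bar>z$?k - x$?k\<bar> \<le> 1"
  proof (cases "z = x")
    case False
    with z have "l1dist x z = 1" by (simp add: nbr_def)
    moreover have "\<bar>x$?k - z$?k\<bar> \<le> l1dist x z" unfolding l1dist_def
      by (rule member_le_sum) auto
    ultimately show ?thesis by (simp add: abs_minus_commute)
  qed simp
  hence a: "real_of_int \<bar>z$?k\<bar> \<le> real_of_int \<bar>x$?k\<bar> + 1" by linarith
  have b: "real_of_int \<bar>x$?k\<bar> + 1 \<le> (\<Sum>x\<in>\<Lambda>. real_of_int \<bar>x$?k\<bar> + 1)"
    by (rule member_le_sum[OF x _ fin]) simp
  have "(real_of_int (z$?k))^2 = (real_of_int \<bar>z$?k\<bar>)^2" by simp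
  also have "\<dots> \<le> (\<Sum>x\<in>\<Lambda>. real_of_int \<bar>x$?k\<bar> + 1)^2"
    by (rule power_mono) (use a b in auto)
  finally show ?thesis by (simp add: hL_def Rk_def)
qed

lemma hL_sum_nbrs:
  "(\<Sum>z\<in>nset x. hL \<Lambda> z) \<le> real (2 * CARD('d)) * hL \<Lambda> (x::int^'d) - 1"
proof -
  let ?k = "undefined::'d"
  have "(\<Sum>z\<in>nset x. hL \<Lambda> z) = (\<Sum>v\<in>Dset. hL \<Lambda> (x + v))" by (rule sum_nset)
  also have "\<dots> = (\<Sum>v\<in>Dset. hL \<Lambda> x - 2 * real_of_int (x$?k) * real_of_int (v$?k) - (real_of_int (v$?k))^2)"
    by (intro sum.cong) (auto simp: hL_def power2_eq_square algebra_simps)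
  also have "\<dots> = real (card (Dset::(int^'d) set)) * hL \<Lambda> x - 2 * real_of_int (x$?k) * (\<Sum>v\<in>Dset. real_of_int (v$?k)) - (\<Sum>v\<in>Dset. (real_of_int (v$?k))^2)"
    by (simp add: sum_subtractf sum_distrib_left)
  also have "(\<Sum>v\<in>Dset. real_of_int ((v::int^'d)$?k)) = 0"
    by (rule sum_Dset_odd) simp
  also have "(\<Sum>v\<in>Dset. (real_of_int ((v::int^'d)$?k))^2) \<ge> (real_of_int ((axis ?k 1::int^'d)$?k))^2"
    by (rule member_le_sum) (auto simp: finite_Dset Dset_char)
  hence "(\<Sum>v\<in>Dset. (real_of_int ((v::int^'d)$?k))^2) \<ge> 1" by simp
  ultimately show ?thesis by (simp add: card_Dset)
qed

definition surv :: "(int^'d) set \<Rightarrow> nat \<Rightarrow> int^'d \<Rightarrow> real" where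
  "surv \<Lambda> m x = (\<Sum>y\<in>\<Lambda>. walkP \<Lambda> m x y)"

lemma walkP_Suc_in: fixes x :: "int^'d" shows "x \<in> \<Lambda> \<Longrightarrow> walkP \<Lambda> (Suc m) x y = (\<Sum>z\<in>{z\<in>\<Lambda>. nbr x z}. walkP \<Lambda> m z y) / real (2 * CARD('d))"
  by simp

lemma lyap_bound:
  assumes fin: "finite \<Lambda>" and x: "x \<in> \<Lambda>"
  shows "(\<Sum>m<n. surv \<Lambda> m x) + (\<Sum>y\<in>\<Lambda>. walkP \<Lambda> n x y * hL \<Lambda> y) \<le> real (2 * CARD('d)) * hL \<Lambda> (x::int^'d)"
  using x
proof (induction n arbitrary: x)
  case 0
  have "(\<Sum>y\<in>\<Lambda>. walkP \<Lambda> 0 x y * hL \<Lambda> y) = (\<Sum>y\<in>\<Lambda>. if x = y then hL \<Lambda> y else 0)"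
    by (rule sum.cong) (use 0 in auto)
  also have "\<dots> = hL \<Lambda> x" using 0 fin by (simp add: sum.delta)
  finally have "(\<Sum>y\<in>\<Lambda>. walkP \<Lambda> 0 x y * hL \<Lambda> y) = hL \<Lambda> x" .
  moreover have "hL \<Lambda> x \<ge> 0" using hL_nonneg_nbr[OF fin 0] by simp
  moreover have "1 \<le> real (2*CARD('d))"
  proof -
    have "CARD('d) > 0" by (simp add: card_gt_0_iff)
    thus ?thesis by linarith
  qed
  ultimately show ?case using mult_right_mono[of 1 "real (2*CARD('d))" "hL \<Lambda> x"] by simp
next
  case (Suc n)
  let ?d = "real (2 * CARD('d))"
  let ?N = "{z\<in>\<Lambda>. nbr x z}"
  have s0: "surv \<Lambda> 0 x = 1" using Suc.prems fin by (simp add: surv_def if_distrib sum.delta cong: if_cong)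
  have sS: "surv \<Lambda> (Suc m) x = (\<Sum>z\<in>?N. surv \<Lambda> m z) / ?d" for m
    using Suc.prems by (simp add: surv_def sum_divide_distrib[symmetric] sum.swap[of _ \<Lambda>])
  have wS: "(\<Sum>y\<in>\<Lambda>. walkP \<Lambda> (Suc n) x y * hL \<Lambda> y) = (\<Sum>z\<in>?N. \<Sum>y\<in>\<Lambda>. walkP \<Lambda> n z y * hL \<Lambda> y) / ?d"
    using Suc.prems by (simp add: sum_divide_distrib[symmetric] sum_distrib_right sum.swap[of _ \<Lambda>])
  have "(\<Sum>m<Suc n. surv \<Lambda> m x) = 1 + (\<Sum>m<n. surv \<Lambda> (Suc m) x)"
    by (subst sum.lessThan_Suc_shift) (simp add: s0)
  also have "(\<Sum>m<n. surv \<Lambda> (Suc m) x) = (\<Sum>z\<in>?N. \<Sum>m<n. surv \<Lambda> m z) / ?d"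
    by (simp add: sS sum_divide_distrib[symmetric] sum.swap[of _ "{..<n}"])
  finally have e1: "(\<Sum>m<Suc n. surv \<Lambda> m x) = 1 + (\<Sum>z\<in>?N. \<Sum>m<n. surv \<Lambda> m z) / ?d" .
  have "(\<Sum>m<Suc n. surv \<Lambda> m x) + (\<Sum>y\<in>\<Lambda>. walkP \<Lambda> (Suc n) x y * hL \<Lambda> y)
      = 1 + (\<Sum>z\<in>?N. (\<Sum>m<n. surv \<Lambda> m z) + (\<Sum>y\<in>\<Lambda>. walkP \<Lambda> n z y * hL \<Lambda> y)) / ?d"
    unfolding e1 wS by (simp only: sum.distrib add_divide_distrib add.assoc)
  also have "\<dots> \<le> 1 + (\<Sum>z\<in>?N. ?d * hL \<Lambda> z) / ?d"
    by (intro add_left_mono divide_right_mono sum_mono Suc.IH) auto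
  also have "\<dots> = 1 + (\<Sum>z\<in>?N. hL \<Lambda> z)"
    by (simp add: sum_distrib_left[symmetric])
  also have "(\<Sum>z\<in>?N. hL \<Lambda> z) \<le> (\<Sum>z\<in>nset x. hL \<Lambda> z)"
    by (rule sum_mono2[OF finite_nset]) (auto simp: nset_def intro!: hL_nonneg_nbr[OF fin Suc.prems])
  also have "\<dots> \<le> ?d * hL \<Lambda> x - 1" by (rule hL_sum_nbrs)
  finally show ?case by simp
qed

lemma partial_walk_bound:
  assumes fin: "finite \<Lambda>"
  shows "(\<Sum>m<n. walkP \<Lambda> m x y) \<le> (if x \<in> \<Lambda> then real (2 * CARD('d)) * hL \<Lambda> (x::int^'d) else 0)"
proof (cases "x \<in> \<Lambda> \<and> y \<in> \<Lambda>")
  case True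
  have "(\<Sum>m<n. walkP \<Lambda> m x y) \<le> (\<Sum>m<n. surv \<Lambda> m x)"
    unfolding surv_def by (intro sum_mono member_le_sum) (use True fin in \<open>auto simp: walkP_nonneg\<close>)
  also have "\<dots> \<le> real (2 * CARD('d)) * hL \<Lambda> x"
  proof -
    have "(\<Sum>y\<in>\<Lambda>. walkP \<Lambda> n x y * hL \<Lambda> y) \<ge> 0"
      by (intro sum_nonneg mult_nonneg_nonneg walkP_nonneg hL_nonneg_nbr[OF fin]) auto
    thus ?thesis using lyap_bound[OF fin, of x n] True by linarith
  qed
  finally show ?thesis using True by simp
next
  case False
  hence "(\<Sum>m<n. walkP \<Lambda> m x y) = 0" by (auto simp: walkP_out walkP_outx)
  moreover have "x \<in> \<Lambda> \<Longrightarrow> hL \<Lambda> x \<ge> 0" using hL_nonneg_nbr[OF fin] by blast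
  ultimately show ?thesis by simp
qed

lemma walk_summable: "finite \<Lambda> \<Longrightarrow> summable (\<lambda>n. walkP \<Lambda> n x y)"
  by (rule summableI_nonneg_bounded[OF walkP_nonneg partial_walk_bound])

lemma green_nonneg: "finite \<Lambda> \<Longrightarrow> green \<Lambda> x y \<ge> 0"
  unfolding green_def by (simp add: suminf_nonneg walk_summable walkP_nonneg)

lemma green_sym: "green \<Lambda> x y = green \<Lambda> y x"
  unfolding green_def by (simp add: walkP_sym)

lemma green_rowsum:
  assumes fin: "finite \<Lambda>" and x: "x \<in> \<Lambda>"
  shows "(\<Sum>y\<in>\<Lambda>. green \<Lambda> x y) \<le> real (2 * CARD('d)) * hL \<Lambda> (x::int^'d)"
proof -
  have "(\<Sum>y\<in>\<Lambda>. green \<Lambda> x y) = (\<Sum>n. surv \<Lambda> n x)"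
    unfolding green_def surv_def by (rule suminf_sum[symmetric]) (simp add: walk_summable fin)
  also have "\<dots> \<le> real (2 * CARD('d)) * hL \<Lambda> x"
  proof (rule suminf_le_const)
    show "summable (\<lambda>n. surv \<Lambda> n x)" unfolding surv_def
      by (rule summable_sum) (simp add: walk_summable fin)
    fix n
    have "(\<Sum>y\<in>\<Lambda>. walkP \<Lambda> n x y * hL \<Lambda> y) \<ge> 0"
      by (intro sum_nonneg mult_nonneg_nonneg walkP_nonneg hL_nonneg_nbr[OF fin]) auto
    thus "sum (\<lambda>n. surv \<Lambda> n x) {..<n} \<le> real (2 * CARD('d)) * hL \<Lambda> x"
      using lyap_bound[OF fin x, of n] by linarith
  qed
  finally show ?thesis .
qed

lemma green_rec:
  fixes x :: "int^'d"
  assumes fin: "finite \<Lambda>" and x: "x \<in> \<Lambda>"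
  shows "green \<Lambda> x y = (if x = y then 1 else 0) + (\<Sum>z\<in>\<Lambda> \<inter> nset x. green \<Lambda> z y) / real (2 * CARD('d))"
proof -
  have "green \<Lambda> x y = walkP \<Lambda> 0 x y + (\<Sum>n. walkP \<Lambda> (Suc n) x y)"
    unfolding green_def using suminf_split_head[OF walk_summable[OF fin], of x y] by simp
  also have "(\<Sum>n. walkP \<Lambda> (Suc n) x y) = (\<Sum>n. (\<Sum>z\<in>\<Lambda> \<inter> nset x. walkP \<Lambda> n z y) / real (2 * CARD('d)))"
    using x by (simp add: nbrs_eq)
  also have "\<dots> = (\<Sum>n. (\<Sum>z\<in>\<Lambda> \<inter> nset x. walkP \<Lambda> n z y)) / real (2 * CARD('d))"
    by (rule suminf_divide) (auto intro!: summable_sum simp: walk_summable fin)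
  also have "(\<Sum>n. (\<Sum>z\<in>\<Lambda> \<inter> nset x. walkP \<Lambda> n z y)) = (\<Sum>z\<in>\<Lambda> \<inter> nset x. green \<Lambda> z y)"
    unfolding green_def by (rule suminf_sum) (simp add: walk_summable fin)
  finally show ?thesis using x by simp
qed



definition bp :: "(int^'d) set \<Rightarrow> ((int^'d) \<times> (int^'d)) set" where
  "bp \<Lambda> = {(x,y). x \<in> \<Lambda> \<and> y \<in> bdry \<Lambda> \<and> nbr x y}"

definition Bf :: "(int^'d) set \<Rightarrow> (int^'d \<Rightarrow> real) \<Rightarrow> (int^'d \<Rightarrow> real) \<Rightarrow> real" where
  "Bf \<Lambda> f g = 1/2 * (\<Sum>(x,y)\<in>nnpairs \<Lambda>. (f x - f y) * (g x - g y)) + (\<Sum>(x,y)\<in>bp \<Lambda>. f x * g x)"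

definition Qf :: "(int^'d) set \<Rightarrow> (int^'d \<Rightarrow> real) \<Rightarrow> real" where
  "Qf \<Lambda> f = Bf \<Lambda> f f"

definition inn :: "(int^'d) set \<Rightarrow> (int^'d \<Rightarrow> real) \<Rightarrow> (int^'d \<Rightarrow> real) \<Rightarrow> real" where
  "inn \<Lambda> f g = (\<Sum>x\<in>\<Lambda>. f x * g x)"

definition gr :: "(int^'d) set \<Rightarrow> (int^'d \<Rightarrow> real) \<Rightarrow> int^'d \<Rightarrow> real" where
  "gr \<Lambda> \<xi> x = (\<Sum>y\<in>\<Lambda>. green \<Lambda> x y * \<xi> y)"

lemma nnpairs_Sigma: "nnpairs \<Lambda> = Sigma \<Lambda> (\<lambda>x. \<Lambda> \<inter> nset x)"
  by (auto simp: nnpairs_def nset_def)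
lemma bp_Sigma: "bp \<Lambda> = Sigma \<Lambda> (\<lambda>x. bdry \<Lambda> \<inter> nset x)"
  by (auto simp: bp_def nset_def)

lemma finite_nnpairs: "finite \<Lambda> \<Longrightarrow> finite (nnpairs \<Lambda>)"
  unfolding nnpairs_Sigma by (auto intro!: finite_SigmaI simp: finite_nset)
lemma finite_bp: "finite \<Lambda> \<Longrightarrow> finite (bp \<Lambda>)"
  unfolding bp_Sigma by (auto intro!: finite_SigmaI simp: finite_nset)

lemma sum_nn: "finite \<Lambda> \<Longrightarrow> (\<Sum>(x,y)\<in>nnpairs \<Lambda>. F x y) = (\<Sum>x\<in>\<Lambda>. \<Sum>y\<in>\<Lambda> \<inter> nset x. F x y)"
  unfolding nnpairs_Sigma by (rule sum.Sigma[symmetric]) (auto simp: finite_nset)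
lemma sum_bp: "finite \<Lambda> \<Longrightarrow> (\<Sum>(x,y)\<in>bp \<Lambda>. F x y) = (\<Sum>x\<in>\<Lambda>. \<Sum>y\<in>bdry \<Lambda> \<inter> nset x. F x y)"
  unfolding bp_Sigma by (rule sum.Sigma[symmetric]) (auto simp: finite_nset)

lemma nn_swap: "(\<Sum>(x,y)\<in>nnpairs \<Lambda>. F x y) = (\<Sum>(x,y)\<in>nnpairs \<Lambda>. F y x)"
proof -
  have "prod.swap ` nnpairs \<Lambda> = nnpairs \<Lambda>"
    by (auto simp: nnpairs_def nbr_sym image_iff)
  hence "(\<Sum>(x,y)\<in>nnpairs \<Lambda>. F x y) = (\<Sum>(x,y)\<in>prod.swap ` nnpairs \<Lambda>. F x y)" by simp
  also have "\<dots> = (\<Sum>(x,y)\<in>nnpairs \<Lambda>. F y x)"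
    by (subst sum.reindex) (auto simp: comp_def case_prod_beta)
  finally show ?thesis .
qed

lemma SBP:
  fixes f g :: "int^'d \<Rightarrow> real"
  assumes fin: "finite \<Lambda>"
  shows "1/2 * (\<Sum>(x,y)\<in>nnpairs \<Lambda>. (f x - f y) * (g x - g y)) = (\<Sum>x\<in>\<Lambda>. f x * (\<Sum>y\<in>\<Lambda> \<inter> nset x. g x - g y))"
proof -
  have "(\<Sum>(x,y)\<in>nnpairs \<Lambda>. (f x - f y) * (g x - g y)) = (\<Sum>(x,y)\<in>nnpairs \<Lambda>. f x * (g x - g y)) + (\<Sum>(x,y)\<in>nnpairs \<Lambda>. f y * (g y - g x))"
    unfolding sum.distrib[symmetric] by (intro sum.cong) (auto simp: right_diff_distrib left_diff_distrib)
  also have "(\<Sum>(x,y)\<in>nnpairs \<Lambda>. f y * (g y - g x)) = (\<Sum>(x,y)\<in>nnpairs \<Lambda>. f x * (g x - g y))"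
    by (rule nn_swap)
  finally have "1/2 * (\<Sum>(x,y)\<in>nnpairs \<Lambda>. (f x - f y) * (g x - g y)) = (\<Sum>(x,y)\<in>nnpairs \<Lambda>. f x * (g x - g y))" by simp
  also have "\<dots> = (\<Sum>x\<in>\<Lambda>. f x * (\<Sum>y\<in>\<Lambda> \<inter> nset x. g x - g y))"
    using fin by (simp add: sum_nn sum_distrib_left)
  finally show ?thesis .
qed

lemma Bf_cong: "(\<And>x. x \<in> \<Lambda> \<Longrightarrow> f x = f' x) \<Longrightarrow> (\<And>x. x \<in> \<Lambda> \<Longrightarrow> g x = g' x) \<Longrightarrow> Bf \<Lambda> f g = Bf \<Lambda> f' g'"
  unfolding Bf_def by (intro arg_cong2[where f="(+)"] arg_cong[where f="\<lambda>t. 1/2 * t"] sum.cong)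
    (auto simp: nnpairs_def bp_def)

lemma Qf_cong: "(\<And>x. x \<in> \<Lambda> \<Longrightarrow> f x = f' x) \<Longrightarrow> Qf \<Lambda> f = Qf \<Lambda> f'"
  unfolding Qf_def by (rule Bf_cong)

lemma Bf_sym: "Bf \<Lambda> f g = Bf \<Lambda> g f"
  unfolding Bf_def by (simp add: mult.commute)

lemma Qf_lin: "Qf \<Lambda> (\<lambda>x. a * f x + b * g x) = a^2 * Qf \<Lambda> f + 2*a*b * Bf \<Lambda> f g + b^2 * Qf \<Lambda> g"
proof -
  have e1: "(\<Sum>(x,y)\<in>S. ((a*f x + b*g x) - (a*f y + b*g y)) * ((a*f x + b*g x) - (a*f y + b*g y)))
     = a^2 * (\<Sum>(x,y)\<in>S. (f x - f y)*(f x - f y)) + 2*a*b*(\<Sum>(x,y)\<in>S. (f x - f y)*(g x - g y)) + b^2*(\<Sum>(x,y)\<in>S. (g x - g y)*(g x - g y))" for S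
    unfolding sum_distrib_left sum.distrib[symmetric] by (intro sum.cong) (auto simp: algebra_simps power2_eq_square)
  have e2: "(\<Sum>(x,y)\<in>S. (a*f x + b*g x) * (a*f x + b*g x))
     = a^2 * (\<Sum>(x,y)\<in>S. f x * f x) + 2*a*b*(\<Sum>(x,y)\<in>S. f x * g x) + b^2*(\<Sum>(x,y)\<in>S. g x * g x)" for S
    unfolding sum_distrib_left sum.distrib[symmetric] by (intro sum.cong) (auto simp: algebra_simps power2_eq_square)
  show ?thesis unfolding Qf_def Bf_def e1 e2 by (simp add: algebra_simps)
qed

lemma Qf_nonneg: "Qf \<Lambda> f \<ge> 0"
  unfolding Qf_def Bf_def by (intro add_nonneg_nonneg mult_nonneg_nonneg sum_nonneg) auto

lemma Qf_expand: "Qf \<Lambda> f = 1/2 * (\<Sum>(x,y)\<in>nnpairs \<Lambda>. (f x - f y)^2) + (\<Sum>(x,y)\<in>bp \<Lambda>. (f x)^2)"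
  unfolding Qf_def Bf_def by (simp add: power2_eq_square)

lemma gr_rec:
  fixes x :: "int^'d"
  assumes fin: "finite \<Lambda>" and x: "x \<in> \<Lambda>"
  shows "gr \<Lambda> \<xi> x = \<xi> x + (\<Sum>z\<in>\<Lambda> \<inter> nset x. gr \<Lambda> \<xi> z) / real (2 * CARD('d))"
proof -
  have "gr \<Lambda> \<xi> x = (\<Sum>y\<in>\<Lambda>. (if x = y then \<xi> y else 0) + (\<Sum>z\<in>\<Lambda> \<inter> nset x. green \<Lambda> z y * \<xi> y) / real (2 * CARD('d)))"
    unfolding gr_def by (intro sum.cong refl) (simp add: green_rec[OF fin x] distrib_right sum_distrib_right)
  also have "\<dots> = \<xi> x + (\<Sum>y\<in>\<Lambda>. \<Sum>z\<in>\<Lambda> \<inter> nset x. green \<Lambda> z y * \<xi> y) / real (2 * CARD('d))"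
    using x fin by (simp add: sum.distrib sum.delta sum_divide_distrib[symmetric])
  also have "(\<Sum>y\<in>\<Lambda>. \<Sum>z\<in>\<Lambda> \<inter> nset x. green \<Lambda> z y * \<xi> y) = (\<Sum>z\<in>\<Lambda> \<inter> nset x. gr \<Lambda> \<xi> z)"
    unfolding gr_def by (rule sum.swap)
  finally show ?thesis .
qed

lemma Bf_gr:
  fixes \<phi> :: "int^'d \<Rightarrow> real"
  assumes fin: "finite \<Lambda>"
  shows "Bf \<Lambda> (gr \<Lambda> \<xi>) \<phi> = real (2 * CARD('d)) * inn \<Lambda> \<xi> \<phi>"
proof -
  let ?g = "gr \<Lambda> \<xi>" let ?d = "real (2 * CARD('d))"
  have "Bf \<Lambda> ?g \<phi> = 1/2 * (\<Sum>(x,y)\<in>nnpairs \<Lambda>. (\<phi> x - \<phi> y) * (?g x - ?g y)) + (\<Sum>(x,y)\<in>bp \<Lambda>. \<phi> x * ?g x)"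
    unfolding Bf_def by (simp add: mult.commute)
  also have "\<dots> = (\<Sum>x\<in>\<Lambda>. \<phi> x * (\<Sum>y\<in>\<Lambda> \<inter> nset x. ?g x - ?g y)) + (\<Sum>x\<in>\<Lambda>. \<phi> x * (real (card (bdry \<Lambda> \<inter> nset x)) * ?g x))"
    unfolding SBP[OF fin] sum_bp[OF fin] by (simp add: sum_distrib_left ac_simps)
  also have "\<dots> = (\<Sum>x\<in>\<Lambda>. \<phi> x * (?d * \<xi> x))"
    unfolding sum.distrib[symmetric]
  proof (intro sum.cong refl)
    fix x assume x: "x \<in> \<Lambda>"
    have "(\<Sum>y\<in>\<Lambda> \<inter> nset x. ?g x - ?g y) + real (card (bdry \<Lambda> \<inter> nset x)) * ?g x
        = (real (card (\<Lambda> \<inter> nset x)) + real (card (bdry \<Lambda> \<inter> nset x))) * ?g x - (\<Sum>y\<in>\<Lambda> \<inter> nset x. ?g y)"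
      by (simp add: sum_subtractf algebra_simps)
    also have "\<dots> = ?d * ?g x - (\<Sum>y\<in>\<Lambda> \<inter> nset x. ?g y)"
      using card_split[OF x] by simp
    also have "\<dots> = ?d * \<xi> x"
      using gr_rec[OF fin x, of \<xi>] by (simp add: field_simps)
    finally show "\<phi> x * (\<Sum>y\<in>\<Lambda> \<inter> nset x. ?g x - ?g y) + \<phi> x * (real (card (bdry \<Lambda> \<inter> nset x)) * ?g x) = \<phi> x * (?d * \<xi> x)"
      by (simp add: distrib_left[symmetric])
  qed
  also have "\<dots> = ?d * inn \<Lambda> \<xi> \<phi>"
    by (simp add: inn_def sum_distrib_left algebra_simps)
  finally show ?thesis .
qed

lemma cross_zero:
  fixes f :: "int^'d \<Rightarrow> real"
  assumes fin: "finite \<Lambda>"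
  shows "1/2 * (\<Sum>(x,y)\<in>nnpairs \<Lambda>. (f x - f y) * (tilt u x - tilt u y)) + (\<Sum>(x,y)\<in>bp \<Lambda>. f x * (tilt u x - tilt u y)) = 0"
proof -
  have "1/2 * (\<Sum>(x,y)\<in>nnpairs \<Lambda>. (f x - f y) * (tilt u x - tilt u y)) + (\<Sum>(x,y)\<in>bp \<Lambda>. f x * (tilt u x - tilt u y))
     = (\<Sum>x\<in>\<Lambda>. f x * ((\<Sum>y\<in>\<Lambda> \<inter> nset x. tilt u x - tilt u y) + (\<Sum>y\<in>bdry \<Lambda> \<inter> nset x. tilt u x - tilt u y)))"
    unfolding SBP[OF fin] sum_bp[OF fin] by (simp add: sum_distrib_left distrib_left sum.distrib)
  also have "\<dots> = (\<Sum>x\<in>\<Lambda>. f x * 0)"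
  proof (intro sum.cong refl arg_cong[where f="\<lambda>t. f _ * t"])
    fix x assume x: "x \<in> \<Lambda>"
    have "(\<Sum>y\<in>\<Lambda> \<inter> nset x. tilt u x - tilt u y) + (\<Sum>y\<in>bdry \<Lambda> \<inter> nset x. tilt u x - tilt u y)
        = (\<Sum>y\<in>nset x. tilt u x - tilt u y)" by (rule sum_split_nset[OF x, symmetric])
    also have "\<dots> = (\<Sum>v\<in>Dset. - zdot v u)"
      by (simp add: sum_nset tilt_def zdot_add)
    also have "\<dots> = 0" by (rule sum_Dset_odd) (simp add: zdot_minus)
    finally show "(\<Sum>y\<in>\<Lambda> \<inter> nset x. tilt u x - tilt u y) + (\<Sum>y\<in>bdry \<Lambda> \<inter> nset x. tilt u x - tilt u y) = 0" .
  qed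
  finally show ?thesis by simp
qed

lemma inn_gr_bound:
  fixes \<phi> :: "int^'d \<Rightarrow> real"
  assumes fin: "finite \<Lambda>"
  shows "inn \<Lambda> \<phi> (gr \<Lambda> \<phi>) \<le> (\<Sum>x\<in>\<Lambda>. real (2 * CARD('d)) * hL \<Lambda> x) * inn \<Lambda> \<phi> \<phi>"
proof -
  let ?K = "\<Sum>x\<in>\<Lambda>. real (2 * CARD('d)) * hL \<Lambda> x"
  have Kx: "(\<Sum>y\<in>\<Lambda>. green \<Lambda> x y) \<le> ?K" if x: "x \<in> \<Lambda>" for x
  proof -
    have "(\<Sum>y\<in>\<Lambda>. green \<Lambda> x y) \<le> real (2 * CARD('d)) * hL \<Lambda> x" by (rule green_rowsum[OF fin x])
    also have "\<dots> \<le> ?K"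
      by (rule member_le_sum[OF x _ fin]) (auto intro!: mult_nonneg_nonneg hL_nonneg_nbr[OF fin])
    finally show ?thesis .
  qed
  have "inn \<Lambda> \<phi> (gr \<Lambda> \<phi>) = (\<Sum>x\<in>\<Lambda>. \<Sum>y\<in>\<Lambda>. green \<Lambda> x y * (\<phi> x * \<phi> y))"
    by (simp add: inn_def gr_def sum_distrib_left algebra_simps)
  also have "\<dots> \<le> (\<Sum>x\<in>\<Lambda>. \<Sum>y\<in>\<Lambda>. green \<Lambda> x y * ((\<phi> x)^2 / 2 + (\<phi> y)^2 / 2))"
  proof (intro sum_mono mult_left_mono green_nonneg[OF fin])
    fix x y
    have "0 \<le> (\<phi> x - \<phi> y)^2" by simp
    thus "\<phi> x * \<phi> y \<le> (\<phi> x)^2 / 2 + (\<phi> y)^2 / 2" by (simp add: power2_eq_square algebra_simps)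
  qed
  also have "\<dots> = (\<Sum>x\<in>\<Lambda>. \<Sum>y\<in>\<Lambda>. green \<Lambda> x y * (\<phi> x)^2 / 2) + (\<Sum>x\<in>\<Lambda>. \<Sum>y\<in>\<Lambda>. green \<Lambda> x y * (\<phi> y)^2 / 2)"
    by (simp add: sum.distrib algebra_simps)
  also have "(\<Sum>x\<in>\<Lambda>. \<Sum>y\<in>\<Lambda>. green \<Lambda> x y * (\<phi> y)^2 / 2) = (\<Sum>x\<in>\<Lambda>. \<Sum>y\<in>\<Lambda>. green \<Lambda> x y * (\<phi> x)^2 / 2)"
    by (subst sum.swap) (simp add: green_sym)
  also have "(\<Sum>x\<in>\<Lambda>. \<Sum>y\<in>\<Lambda>. green \<Lambda> x y * (\<phi> x)^2 / 2) + (\<Sum>x\<in>\<Lambda>. \<Sum>y\<in>\<Lambda>. green \<Lambda> x y * (\<phi> x)^2 / 2)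
      = (\<Sum>x\<in>\<Lambda>. \<Sum>y\<in>\<Lambda>. green \<Lambda> x y * (\<phi> x)^2)"
    by (simp add: sum_divide_distrib[symmetric])
  also have "\<dots> = (\<Sum>x\<in>\<Lambda>. (\<phi> x)^2 * (\<Sum>y\<in>\<Lambda>. green \<Lambda> x y))"
    by (intro sum.cong refl) (simp add: sum_distrib_right mult.commute)
  also have "\<dots> \<le> (\<Sum>x\<in>\<Lambda>. (\<phi> x)^2 * ?K)"
    by (intro sum_mono mult_left_mono Kx) auto
  also have "\<dots> = ?K * inn \<Lambda> \<phi> \<phi>"
    unfolding inn_def power2_eq_square sum_distrib_right[symmetric] by (rule mult.commute)
  finally show ?thesis .
qed

lemma coercive:
  fixes \<Lambda> :: "(int^'d) set"
  assumes fin: "finite \<Lambda>"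
  obtains c where "c > 0" "\<And>\<phi>. Qf \<Lambda> \<phi> \<ge> c * inn \<Lambda> \<phi> \<phi>"
proof -
  let ?d = "real (2 * CARD('d))"
  define K where "K = (\<Sum>x\<in>\<Lambda>. ?d * hL \<Lambda> x) + 1"
  have K0: "(\<Sum>x\<in>\<Lambda>. ?d * hL \<Lambda> x) \<ge> 0"
    by (intro sum_nonneg mult_nonneg_nonneg hL_nonneg_nbr[OF fin]) auto
  hence Kpos: "K > 0" by (simp add: K_def)
  have dpos: "?d > 0" by simp
  have main: "Qf \<Lambda> \<phi> \<ge> (?d / K) * inn \<Lambda> \<phi> \<phi>" for \<phi> :: "int^'d \<Rightarrow> real"
  proof -
    let ?g = "gr \<Lambda> \<phi>" let ?I = "inn \<Lambda> \<phi> \<phi>" let ?t = "1 / K"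
    have I0: "?I \<ge> 0" unfolding inn_def by (intro sum_nonneg) simp
    have "0 \<le> Qf \<Lambda> (\<lambda>x. ?t * ?g x + (-1) * \<phi> x)" by (rule Qf_nonneg)
    also have "Qf \<Lambda> (\<lambda>x. ?t * ?g x + (-1) * \<phi> x) = ?t^2 * Qf \<Lambda> ?g + 2 * ?t * (-1) * Bf \<Lambda> ?g \<phi> + (-1)^2 * Qf \<Lambda> \<phi>"
      by (rule Qf_lin)
    finally have a: "2 * ?t * Bf \<Lambda> ?g \<phi> \<le> ?t^2 * Qf \<Lambda> ?g + Qf \<Lambda> \<phi>" by simp
    have b: "Bf \<Lambda> ?g \<phi> = ?d * ?I" by (rule Bf_gr[OF fin])
    have "Qf \<Lambda> ?g = ?d * inn \<Lambda> \<phi> ?g" unfolding Qf_def by (rule Bf_gr[OF fin])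
    also have "\<dots> \<le> ?d * (K * ?I)"
    proof -
      have "inn \<Lambda> \<phi> ?g \<le> (K - 1) * ?I" using inn_gr_bound[OF fin, of \<phi>] by (simp add: K_def)
      also have "\<dots> \<le> K * ?I" using I0 by (simp add: algebra_simps)
      finally show ?thesis using dpos by simp
    qed
    finally have c: "Qf \<Lambda> ?g \<le> ?d * (K * ?I)" .
    have "2 * ?t * (?d * ?I) \<le> ?t^2 * (?d * (K * ?I)) + Qf \<Lambda> \<phi>"
      using a b c Kpos by (smt (verit) mult_left_mono zero_le_power2)
    moreover have "?t^2 * (?d * (K * ?I)) = ?t * (?d * ?I)" using Kpos by (simp add: power2_eq_square field_simps)
    ultimately have "?t * (?d * ?I) \<le> Qf \<Lambda> \<phi>" by linarith
    thus ?thesis by simp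
  qed
  show ?thesis by (rule that[of "?d / K"]) (use Kpos main in auto)
qed

lemma Qf_gr: "finite \<Lambda> \<Longrightarrow> Qf \<Lambda> (gr \<Lambda> \<xi>) = real (2 * CARD('d)) * green_form \<Lambda> (\<xi> :: int^'d \<Rightarrow> real)"
  unfolding Qf_def by (simp add: Bf_gr inn_def green_form_def gr_def sum_distrib_left algebra_simps)

lemma green_form_nonneg: "finite \<Lambda> \<Longrightarrow> green_form \<Lambda> (\<xi> :: int^'d \<Rightarrow> real) \<ge> 0"
  using Qf_gr[of \<Lambda> \<xi>] Qf_nonneg[of \<Lambda> "gr \<Lambda> \<xi>"]
  by (simp add: zero_le_mult_iff)



interpretation lbprod: product_sigma_finite "\<lambda>_::int^'d. lborel::real measure"
  by standard

lemma comp_meas: "x \<in> \<Lambda> \<Longrightarrow> (\<lambda>\<phi>. \<phi> x) \<in> borel_measurable (fieldM \<Lambda>)"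
  unfolding fieldM_def by measurable

definition shT :: "(int^'d) set \<Rightarrow> (int^'d \<Rightarrow> real) \<Rightarrow> (int^'d \<Rightarrow> real) \<Rightarrow> int^'d \<Rightarrow> real" where
  "shT \<Lambda> m \<phi> = (\<lambda>x\<in>\<Lambda>. \<phi> x + m x)"

lemma shT_meas: "shT \<Lambda> m \<in> measurable (fieldM \<Lambda>) (fieldM \<Lambda>)"
  unfolding fieldM_def shT_def by measurable

lemma lborel_shift_pre: "A \<in> sets borel \<Longrightarrow> emeasure lborel ((\<lambda>t::real. t + c) -` A) = emeasure lborel A"
proof -
  assume A: "A \<in> sets borel"
  have "emeasure lborel A = emeasure (distr lborel borel ((+) c)) A" by (simp add: lborel_distr_plus)
  also have "\<dots> = emeasure lborel ((+) c -` A \<inter> space lborel)" using A by (simp add: emeasure_distr)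
  moreover have "(\<lambda>t::real. t + c) = (+) c" by (auto simp: add.commute)
  ultimately show ?thesis by simp
qed

lemma pre_borel: "A \<in> sets borel \<Longrightarrow> (\<lambda>t::real. t + c) -` A \<in> sets borel"
  using measurable_sets[of "\<lambda>t::real. t+c" borel borel A] by simp

lemma distr_shT:
  fixes \<Lambda> :: "(int^'d) set"
  assumes fin: "finite \<Lambda>" shows "distr (fieldM \<Lambda>) (fieldM \<Lambda>) (shT \<Lambda> m) = fieldM \<Lambda>"
  unfolding fieldM_def
proof (rule lbprod.PiM_eqI[OF fin])
  fix A :: "int^'d \<Rightarrow> real set" assume A: "\<And>i. i \<in> \<Lambda> \<Longrightarrow> A i \<in> sets lborel"
  have pre: "shT \<Lambda> m -` Pi\<^sub>E \<Lambda> A \<inter> space (Pi\<^sub>M \<Lambda> (\<lambda>_. lborel)) = Pi\<^sub>E \<Lambda> (\<lambda>i. (\<lambda>t. t + m i) -` A i)"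
    by (auto simp: shT_def space_PiM PiE_def Pi_def extensional_def)
  have "emeasure (distr (Pi\<^sub>M \<Lambda> (\<lambda>_. lborel)) (Pi\<^sub>M \<Lambda> (\<lambda>_. lborel)) (shT \<Lambda> m)) (Pi\<^sub>E \<Lambda> A)
      = emeasure (Pi\<^sub>M \<Lambda> (\<lambda>_. lborel)) (Pi\<^sub>E \<Lambda> (\<lambda>i. (\<lambda>t. t + m i) -` A i))"
    using A shT_meas[of \<Lambda> m] unfolding fieldM_def
    by (subst emeasure_distr) (auto intro!: sets_PiM_I_finite fin simp: pre)
  also have "\<dots> = (\<Prod>i\<in>\<Lambda>. emeasure lborel ((\<lambda>t. t + m i) -` A i))"
    using A fin by (subst lbprod.emeasure_PiM) (auto intro: pre_borel)
  also have "\<dots> = (\<Prod>i\<in>\<Lambda>. emeasure lborel (A i))"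
    using A by (intro prod.cong refl lborel_shift_pre) auto
  finally show "emeasure (distr (Pi\<^sub>M \<Lambda> (\<lambda>_. lborel)) (Pi\<^sub>M \<Lambda> (\<lambda>_. lborel)) (shT \<Lambda> m)) (Pi\<^sub>E \<Lambda> A) = (\<Prod>i\<in>\<Lambda>. emeasure lborel (A i))" .
qed auto

lemma integral_shT:
  assumes "finite \<Lambda>" "f \<in> borel_measurable (fieldM \<Lambda>)"
  shows "(\<integral>\<phi>. f (shT \<Lambda> m \<phi>) \<partial>fieldM \<Lambda>) = integral\<^sup>L (fieldM \<Lambda>) (f :: _ \<Rightarrow> real)"
  using integral_distr[OF shT_meas assms(2), of m] distr_shT[OF assms(1), of m] by simp

lemma integrable_shT:
  assumes "finite \<Lambda>" "f \<in> borel_measurable (fieldM \<Lambda>)"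
  shows "integrable (fieldM \<Lambda>) (\<lambda>\<phi>. f (shT \<Lambda> m \<phi>)) \<longleftrightarrow> integrable (fieldM \<Lambda>) (f :: _ \<Rightarrow> real)"
  using integrable_distr_eq[OF shT_meas assms(2), of m] distr_shT[OF assms(1), of m] by simp

lemma meas_pairsum:
  assumes "finite S" "\<And>x y. (x,y) \<in> S \<Longrightarrow> (\<lambda>\<phi>. F \<phi> x y) \<in> borel_measurable M"
  shows "(\<lambda>\<phi>. \<Sum>(x,y)\<in>S. F \<phi> x y :: real) \<in> borel_measurable M"
  by (rule borel_measurable_sum) (use assms in auto)

lemma meas_Qf:
  fixes \<Lambda> :: "(int^'d) set"
  assumes fin: "finite \<Lambda>"
  shows "(\<lambda>\<phi>. Qf \<Lambda> (\<lambda>x. \<phi> x - m x)) \<in> borel_measurable (fieldM \<Lambda>)"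
proof -
  have m1: "(\<lambda>\<phi>. \<Sum>(x,y)\<in>nnpairs \<Lambda>. ((\<phi> x - m x) - (\<phi> y - m y))^2) \<in> borel_measurable (fieldM \<Lambda>)"
  proof (rule meas_pairsum[OF finite_nnpairs[OF fin]])
    fix x y assume "(x,y) \<in> nnpairs \<Lambda>"
    hence xy: "x \<in> \<Lambda>" "y \<in> \<Lambda>" by (auto simp: nnpairs_def)
    show "(\<lambda>\<phi>. ((\<phi> x - m x) - (\<phi> y - m y))^2) \<in> borel_measurable (fieldM \<Lambda>)"
      using comp_meas[OF xy(1)] comp_meas[OF xy(2)] by measurable
  qed
  have m2: "(\<lambda>\<phi>. \<Sum>(x,y)\<in>bp \<Lambda>. (\<phi> x - m x)^2) \<in> borel_measurable (fieldM \<Lambda>)"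
  proof (rule meas_pairsum[OF finite_bp[OF fin]])
    fix x y assume "(x,y) \<in> bp \<Lambda>"
    hence xy: "x \<in> \<Lambda>" by (auto simp: bp_def)
    show "(\<lambda>\<phi>. (\<phi> x - m x)^2) \<in> borel_measurable (fieldM \<Lambda>)"
      using comp_meas[OF xy(1)] by measurable
  qed
  show ?thesis unfolding Qf_expand using m1 m2 by measurable
qed

lemma meas_inn:
  assumes fin: "finite \<Lambda>"
  shows "(\<lambda>\<phi>. inn \<Lambda> \<xi> (\<lambda>x. \<phi> x - m x)) \<in> borel_measurable (fieldM \<Lambda>)"
  unfolding inn_def
proof (rule borel_measurable_sum)
  fix x assume "x \<in> \<Lambda>"
  from comp_meas[OF this] show "(\<lambda>\<phi>. \<xi> x * (\<phi> x - m x)) \<in> borel_measurable (fieldM \<Lambda>)" by measurable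
qed

lemma integrable_gauss1: "a > 0 \<Longrightarrow> integrable lborel (\<lambda>t::real. exp (- (a * t^2)))"
proof -
  assume a: "a > 0"
  define \<sigma> where "\<sigma> = sqrt (1 / (2 * a))"
  have s: "\<sigma> > 0" using a by (simp add: \<sigma>_def)
  have s2: "\<sigma>^2 = 1 / (2*a)" using a by (simp add: \<sigma>_def)
  have sq: "sqrt (2 * pi * \<sigma>^2) > 0" using s by simp
  have eq: "exp (- (a * t^2)) = sqrt (2 * pi * \<sigma>^2) * normal_density 0 \<sigma> t" for t
  proof -
    have h: "2*\<sigma>^2 = 1/a" using s2 by simp
    have "(t - 0)^2 / (2*\<sigma>^2) = a*t^2" unfolding h by simp
    thus ?thesis using sq s unfolding normal_density_def by simp
  qed
  show ?thesis unfolding eq by (intro integrable_mult_right integrable_normal_density) (use s in auto)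
qed

lemma gauss_integrable:
  fixes \<Lambda> :: "(int^'d) set"
  assumes fin: "finite \<Lambda>" and c: "c > 0"
  shows "integrable (fieldM \<Lambda>) (\<lambda>\<phi>. exp (- c * Qf \<Lambda> \<phi>))"
proof -
  obtain c0 where c0: "c0 > 0" "\<And>\<phi>. Qf \<Lambda> \<phi> \<ge> c0 * inn \<Lambda> \<phi> \<phi>" using coercive[OF fin] by blast
  have int: "integrable (fieldM \<Lambda>) (\<lambda>\<phi>. \<Prod>x\<in>\<Lambda>. exp (- ((c*c0) * (\<phi> x)^2)))"
    unfolding fieldM_def
    by (rule lbprod.product_integrable_prod[OF fin]) (use c c0 in \<open>auto intro!: integrable_gauss1\<close>)
  show ?thesis
  proof (rule Bochner_Integration.integrable_bound[OF int])
    show "(\<lambda>\<phi>. exp (- c * Qf \<Lambda> \<phi>)) \<in> borel_measurable (fieldM \<Lambda>)"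
      using meas_Qf[OF fin, of "\<lambda>_. 0"] by simp
    show "AE \<phi> in fieldM \<Lambda>. norm (exp (- c * Qf \<Lambda> \<phi>)) \<le> norm (\<Prod>x\<in>\<Lambda>. exp (- ((c*c0) * (\<phi> x)^2)))"
    proof (intro AE_I2)
      fix \<phi> :: "int^'d \<Rightarrow> real"
      have "(\<Prod>x\<in>\<Lambda>. exp (- ((c*c0) * (\<phi> x)^2))) = exp (- (c*c0) * inn \<Lambda> \<phi> \<phi>)"
        by (simp add: exp_sum[symmetric] inn_def sum_distrib_left power2_eq_square fin)
      moreover have "exp (- c * Qf \<Lambda> \<phi>) \<le> exp (- (c*c0) * inn \<Lambda> \<phi> \<phi>)"
        using c0(2)[of \<phi>] c by (simp add: mult.assoc)
      ultimately show "norm (exp (- c * Qf \<Lambda> \<phi>)) \<le> norm (\<Prod>x\<in>\<Lambda>. exp (- ((c*c0) * (\<phi> x)^2)))"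
        by simp
    qed
  qed
qed

lemma space_fieldM_pos: "finite \<Lambda> \<Longrightarrow> emeasure (fieldM \<Lambda>) (space (fieldM \<Lambda>)) \<noteq> 0"
proof -
  assume fin: "finite \<Lambda>"
  have "space (fieldM \<Lambda>) = Pi\<^sub>E \<Lambda> (\<lambda>_. UNIV)" by (simp add: fieldM_def space_PiM)
  hence "emeasure (fieldM \<Lambda>) (space (fieldM \<Lambda>)) = (\<Prod>i\<in>\<Lambda>. emeasure lborel (UNIV::real set))"
    using fin unfolding fieldM_def by (simp add: lbprod.emeasure_PiM)
  also have "\<dots> = top ^ card \<Lambda>" by simp
  also have "\<dots> \<noteq> 0" by (simp add: top_power_ennreal)
  finally show ?thesis .
qed

lemma integral_pos:
  assumes fin: "finite \<Lambda>" and int: "integrable (fieldM \<Lambda>) f" and pos: "\<And>\<phi>. f \<phi> > (0::real)"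
  shows "integral\<^sup>L (fieldM \<Lambda>) f > 0"
proof -
  have nn: "AE \<phi> in fieldM \<Lambda>. 0 \<le> f \<phi>" by (rule AE_I2) (rule less_imp_le[OF pos])
  have "integral\<^sup>L (fieldM \<Lambda>) f \<ge> 0" by (rule integral_nonneg_AE[OF nn])
  moreover have "integral\<^sup>L (fieldM \<Lambda>) f \<noteq> 0"
  proof
    assume "integral\<^sup>L (fieldM \<Lambda>) f = 0"
    hence ae: "AE \<phi> in fieldM \<Lambda>. f \<phi> = 0"
      using integral_nonneg_eq_0_iff_AE[OF int nn] by simp
    have "AE \<phi> in fieldM \<Lambda>. False"
      by (rule AE_mp[OF ae]) (rule AE_I2, use pos in \<open>metis less_irrefl\<close>)
    hence "ae_filter (fieldM \<Lambda>) = bot" using trivial_limit_def by blast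
    thus False using space_fieldM_pos[OF fin] by (simp add: ae_filter_eq_bot_iff)
  qed
  ultimately show ?thesis by simp
qed



lemma Bf_scale: "Bf \<Lambda> (\<lambda>x. k * g x) \<phi> = k * Bf \<Lambda> g \<phi>"
  unfolding Bf_def by (simp add: sum_distrib_left algebra_simps case_prod_beta)

lemma Qf_scale: "Qf \<Lambda> (\<lambda>x. k * g x) = k^2 * Qf \<Lambda> g"
  unfolding Qf_def by (simp add: Bf_scale Bf_sym[of \<Lambda> _ "\<lambda>x. k * g x"] power2_eq_square)

lemma inn_cong: "(\<And>x. x \<in> \<Lambda> \<Longrightarrow> f x = f' x) \<Longrightarrow> inn \<Lambda> \<xi> f = inn \<Lambda> \<xi> f'"
  unfolding inn_def by (rule sum.cong) auto

lemma shT_in: "x \<in> \<Lambda> \<Longrightarrow> shT \<Lambda> m \<phi> x = \<phi> x + m x"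
  by (simp add: shT_def)

lemma meas_expQ: "finite \<Lambda> \<Longrightarrow> (\<lambda>\<phi>. exp (- c * Qf \<Lambda> \<phi>)) \<in> borel_measurable (fieldM \<Lambda>)"
  using meas_Qf[of \<Lambda> "\<lambda>_. 0"] by simp

lemma gauss_lin:
  fixes \<Lambda> :: "(int^'d) set" and \<xi> :: "int^'d \<Rightarrow> real"
  assumes fin: "finite \<Lambda>" and c: "c > 0"
  shows "integrable (fieldM \<Lambda>) (\<lambda>\<phi>. exp (- c * Qf \<Lambda> \<phi> - 1/2 * inn \<Lambda> \<xi> \<phi>))"
    and "(\<integral>\<phi>. exp (- c * Qf \<Lambda> \<phi> - 1/2 * inn \<Lambda> \<xi> \<phi>) \<partial>fieldM \<Lambda>)
         = exp (green_form \<Lambda> \<xi> / (16 * c * real (2 * CARD('d)))) * (\<integral>\<phi>. exp (- c * Qf \<Lambda> \<phi>) \<partial>fieldM \<Lambda>)"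
proof -
  define D2 where "D2 = real (2 * CARD('d))"
  have D2: "D2 > 0" by (simp add: D2_def)
  define k where "k = - 1 / (4 * c * D2)"
  define m where "m = (\<lambda>x. k * gr \<Lambda> \<xi> x)"
  have Qm: "c * Qf \<Lambda> m = green_form \<Lambda> \<xi> / (16 * c * D2)"
    using c D2 unfolding m_def Qf_scale Qf_gr[OF fin] k_def D2_def[symmetric]
    by (simp add: power2_eq_square field_simps)
  have pw: "exp (- c * Qf \<Lambda> \<phi> - 1/2 * inn \<Lambda> \<xi> \<phi>) = exp (c * Qf \<Lambda> m) * exp (- c * Qf \<Lambda> (shT \<Lambda> (\<lambda>x. - m x) \<phi>))" for \<phi>
  proof -
    have "Qf \<Lambda> (shT \<Lambda> (\<lambda>x. - m x) \<phi>) = Qf \<Lambda> (\<lambda>x. 1 * \<phi> x + (-1) * m x)"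
      by (rule Qf_cong) (simp add: shT_in)
    also have "\<dots> = Qf \<Lambda> \<phi> - 2 * Bf \<Lambda> \<phi> m + Qf \<Lambda> m"
      unfolding Qf_lin by simp
    also have "Bf \<Lambda> \<phi> m = k * D2 * inn \<Lambda> \<xi> \<phi>"
      unfolding Bf_sym[of \<Lambda> \<phi>] m_def Bf_scale Bf_gr[OF fin] D2_def by simp
    finally have "Qf \<Lambda> (shT \<Lambda> (\<lambda>x. - m x) \<phi>) = Qf \<Lambda> \<phi> - 2 * (k * D2 * inn \<Lambda> \<xi> \<phi>) + Qf \<Lambda> m" .
    hence e: "c * Qf \<Lambda> (shT \<Lambda> (\<lambda>x. - m x) \<phi>) = c * Qf \<Lambda> \<phi> - 2 * (c * (k * D2 * inn \<Lambda> \<xi> \<phi>)) + c * Qf \<Lambda> m"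
      by (simp add: right_diff_distrib distrib_left)
    have h: "c * k * D2 = - 1/4" using c D2 by (simp add: k_def field_simps)
    have "c * (k * D2 * inn \<Lambda> \<xi> \<phi>) = (c * k * D2) * inn \<Lambda> \<xi> \<phi>" by (simp add: mult.assoc)
    hence h2: "c * (k * D2 * inn \<Lambda> \<xi> \<phi>) = - 1/4 * inn \<Lambda> \<xi> \<phi>" unfolding h .
    have "- c * Qf \<Lambda> \<phi> - 1/2 * inn \<Lambda> \<xi> \<phi> = c * Qf \<Lambda> m + (- c * Qf \<Lambda> (shT \<Lambda> (\<lambda>x. - m x) \<phi>))"
      using e h2 by simp
    thus ?thesis by (simp add: exp_add[symmetric])
  qed
  have int0: "integrable (fieldM \<Lambda>) (\<lambda>\<phi>. exp (- c * Qf \<Lambda> (shT \<Lambda> (\<lambda>x. - m x) \<phi>)))"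
    using integrable_shT[OF fin meas_expQ[OF fin]] gauss_integrable[OF fin c] by blast
  show "integrable (fieldM \<Lambda>) (\<lambda>\<phi>. exp (- c * Qf \<Lambda> \<phi> - 1/2 * inn \<Lambda> \<xi> \<phi>))"
    unfolding pw by (rule integrable_mult_right[OF int0])
  have "(\<integral>\<phi>. exp (- c * Qf \<Lambda> \<phi> - 1/2 * inn \<Lambda> \<xi> \<phi>) \<partial>fieldM \<Lambda>)
      = exp (c * Qf \<Lambda> m) * (\<integral>\<phi>. exp (- c * Qf \<Lambda> (shT \<Lambda> (\<lambda>x. - m x) \<phi>)) \<partial>fieldM \<Lambda>)"
    unfolding pw by simp
  also have "(\<integral>\<phi>. exp (- c * Qf \<Lambda> (shT \<Lambda> (\<lambda>x. - m x) \<phi>)) \<partial>fieldM \<Lambda>) = (\<integral>\<phi>. exp (- c * Qf \<Lambda> \<phi>) \<partial>fieldM \<Lambda>)"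
    by (rule integral_shT[OF fin meas_expQ[OF fin]])
  finally show "(\<integral>\<phi>. exp (- c * Qf \<Lambda> \<phi> - 1/2 * inn \<Lambda> \<xi> \<phi>) \<partial>fieldM \<Lambda>)
         = exp (green_form \<Lambda> \<xi> / (16 * c * real (2 * CARD('d)))) * (\<integral>\<phi>. exp (- c * Qf \<Lambda> \<phi>) \<partial>fieldM \<Lambda>)"
    using Qm by (simp add: D2_def)
qed

lemma gauss_lin_shift:
  fixes \<Lambda> :: "(int^'d) set" and \<xi> \<psi> :: "int^'d \<Rightarrow> real"
  assumes fin: "finite \<Lambda>" and c: "c > 0"
  shows "integrable (fieldM \<Lambda>) (\<lambda>\<phi>. exp (- c * Qf \<Lambda> (\<lambda>x. \<phi> x - \<psi> x) - 1/2 * inn \<Lambda> \<xi> (\<lambda>x. \<phi> x - \<psi> x)))"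
    and "(\<integral>\<phi>. exp (- c * Qf \<Lambda> (\<lambda>x. \<phi> x - \<psi> x) - 1/2 * inn \<Lambda> \<xi> (\<lambda>x. \<phi> x - \<psi> x)) \<partial>fieldM \<Lambda>)
         = exp (green_form \<Lambda> \<xi> / (16 * c * real (2 * CARD('d)))) * (\<integral>\<phi>. exp (- c * Qf \<Lambda> \<phi>) \<partial>fieldM \<Lambda>)"
proof -
  let ?f = "\<lambda>\<phi>. exp (- c * Qf \<Lambda> (\<lambda>x. \<phi> x - \<psi> x) - 1/2 * inn \<Lambda> \<xi> (\<lambda>x. \<phi> x - \<psi> x))"
  have meas: "?f \<in> borel_measurable (fieldM \<Lambda>)"
    using meas_Qf[OF fin, of \<psi>] meas_inn[OF fin, of \<xi> \<psi>] by measurable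
  have eq: "?f (shT \<Lambda> \<psi> \<phi>) = exp (- c * Qf \<Lambda> \<phi> - 1/2 * inn \<Lambda> \<xi> \<phi>)" for \<phi>
  proof -
    have "Qf \<Lambda> (\<lambda>x. shT \<Lambda> \<psi> \<phi> x - \<psi> x) = Qf \<Lambda> \<phi>" by (rule Qf_cong) (simp add: shT_in)
    moreover have "inn \<Lambda> \<xi> (\<lambda>x. shT \<Lambda> \<psi> \<phi> x - \<psi> x) = inn \<Lambda> \<xi> \<phi>" by (rule inn_cong) (simp add: shT_in)
    ultimately show ?thesis by simp
  qed
  show "integrable (fieldM \<Lambda>) ?f"
    using integrable_shT[OF fin meas, of \<psi>] gauss_lin(1)[OF fin c, of \<xi>] unfolding eq by blast
  have "integral\<^sup>L (fieldM \<Lambda>) ?f = (\<integral>\<phi>. ?f (shT \<Lambda> \<psi> \<phi>) \<partial>fieldM \<Lambda>)"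
    by (rule integral_shT[OF fin meas, symmetric])
  also have "\<dots> = (\<integral>\<phi>. exp (- c * Qf \<Lambda> \<phi> - 1/2 * inn \<Lambda> \<xi> \<phi>) \<partial>fieldM \<Lambda>)"
    unfolding eq ..
  finally show "integral\<^sup>L (fieldM \<Lambda>) ?f = exp (green_form \<Lambda> \<xi> / (16 * c * real (2 * CARD('d)))) * (\<integral>\<phi>. exp (- c * Qf \<Lambda> \<phi>) \<partial>fieldM \<Lambda>)"
    using gauss_lin(2)[OF fin c, of \<xi>] by simp
qed



lemma V_upper:
  fixes V V' V'' :: "real \<Rightarrow> real"
  assumes dV: "\<forall>s. (V has_real_derivative V' s) (at s)"
    and dV': "\<forall>s. (V' has_real_derivative V'' s) (at s)"
    and even: "\<forall>s. V (- s) = V s"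
    and upper: "\<forall>s. V'' s \<le> C2"
  shows "V s \<le> V 0 + C2 / 2 * s^2"
proof -
  have "DERIV (\<lambda>x. V (- x)) 0 :> - V' 0" using DERIV_mirror[where f=V and x=0 and y="V' 0"] dV by simp
  moreover have "(\<lambda>x. V (- x)) = V" using even by auto
  ultimately have "DERIV V 0 :> - V' 0" by simp
  hence V'0: "V' 0 = 0" using DERIV_unique dV by fastforce
  define g where "g x = V' x - C2 * x" for x
  define h where "h x = V x - C2 / 2 * x^2" for x
  have dg: "DERIV g x :> V'' x - C2" for x
    unfolding g_def by (auto intro!: derivative_eq_intros dV'[rule_format])
  have dh: "DERIV h x :> g x" for x
    unfolding h_def g_def by (auto intro!: derivative_eq_intros dV[rule_format] simp: power2_eq_square)
  have g_anti: "g y \<le> g x" if "x \<le> y" for x y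
    by (rule DERIV_nonpos_imp_nonincreasing[OF that]) (use dg upper in \<open>auto intro!: exI[of _ "V'' _ - C2"]\<close>)
  have g0: "g 0 = 0" by (simp add: g_def V'0)
  have "h s \<le> h 0"
  proof (cases "s \<ge> 0")
    case True
    show ?thesis
    proof (rule DERIV_nonpos_imp_nonincreasing[OF True])
      fix x assume "0 \<le> x" "x \<le> s"
      thus "\<exists>y. DERIV h x :> y \<and> y \<le> 0" using dh[of x] g_anti[of 0 x] g0 by auto
    qed
  next
    case False
    show ?thesis
    proof (rule DERIV_nonneg_imp_nondecreasing[where f=h and a=s and b=0])
      show "s \<le> 0" using False by simp
      fix x assume "s \<le> x" "x \<le> 0"
      thus "\<exists>y. DERIV h x :> y \<and> y \<ge> 0" using dh[of x] g_anti[of x 0] g0 by auto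
    qed
  qed
  thus ?thesis by (simp add: h_def)
qed

definition Ne :: "(int^'d) set \<Rightarrow> real" where
  "Ne \<Lambda> = 1/2 * real (card (nnpairs \<Lambda>)) + real (card (bp \<Lambda>))"

definition Tt :: "(int^'d) set \<Rightarrow> (int^'d \<Rightarrow> real) \<Rightarrow> real" where
  "Tt \<Lambda> \<psi> = 1/2 * (\<Sum>(x,y)\<in>nnpairs \<Lambda>. (\<psi> x - \<psi> y)^2) + (\<Sum>(x,y)\<in>bp \<Lambda>. (\<psi> x - \<psi> y)^2)"

definition Wf :: "(int^'d) set \<Rightarrow> (int^'d \<Rightarrow> real) \<Rightarrow> (int^'d \<Rightarrow> real) \<Rightarrow> real" where
  "Wf \<Lambda> \<psi> \<phi> = 1/2 * (\<Sum>(x,y)\<in>nnpairs \<Lambda>. (\<phi> x - \<phi> y)^2) + (\<Sum>(x,y)\<in>bp \<Lambda>. (\<phi> x - \<psi> y)^2)"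

lemma Wf_decomp:
  fixes \<Lambda> :: "(int^'d) set"
  assumes fin: "finite \<Lambda>"
  shows "Wf \<Lambda> (tilt u) \<phi> = Qf \<Lambda> (\<lambda>x. \<phi> x - tilt u x) + Tt \<Lambda> (tilt u)"
proof -
  let ?p = "tilt u" let ?f = "\<lambda>x. \<phi> x - tilt u x"
  have e1: "(\<Sum>(x,y)\<in>nnpairs \<Lambda>. (\<phi> x - \<phi> y)^2) = (\<Sum>(x,y)\<in>nnpairs \<Lambda>. (?f x - ?f y)^2) + 2 * (\<Sum>(x,y)\<in>nnpairs \<Lambda>. (?f x - ?f y) * (?p x - ?p y)) + (\<Sum>(x,y)\<in>nnpairs \<Lambda>. (?p x - ?p y)^2)"
    unfolding sum_distrib_left sum.distrib[symmetric] by (intro sum.cong) (auto simp: algebra_simps power2_eq_square)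
  have e2: "(\<Sum>(x,y)\<in>bp \<Lambda>. (\<phi> x - ?p y)^2) = (\<Sum>(x,y)\<in>bp \<Lambda>. (?f x)^2) + 2 * (\<Sum>(x,y)\<in>bp \<Lambda>. ?f x * (?p x - ?p y)) + (\<Sum>(x,y)\<in>bp \<Lambda>. (?p x - ?p y)^2)"
    unfolding sum_distrib_left sum.distrib[symmetric] by (intro sum.cong) (auto simp: algebra_simps power2_eq_square)
  have cz: "1/2 * (\<Sum>(x,y)\<in>nnpairs \<Lambda>. (?f x - ?f y) * (?p x - ?p y)) + (\<Sum>(x,y)\<in>bp \<Lambda>. ?f x * (?p x - ?p y)) = 0"
    by (rule cross_zero[OF fin])
  show ?thesis unfolding Wf_def Tt_def Qf_expand e1 e2 using cz by (simp add: algebra_simps)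
qed

lemma bdry_mem: "x \<in> \<Lambda> \<Longrightarrow> y \<notin> \<Lambda> \<Longrightarrow> nbr x y \<Longrightarrow> y \<in> bdry \<Lambda>"
  by (auto simp: bdry_def nbr_sym)

lemma grad_energy_eq:
  fixes \<Lambda> :: "(int^'d) set"
  assumes fin: "finite \<Lambda>"
  shows "grad_energy u (glue \<Lambda> \<phi> (tilt u)) = 2 * Qf \<Lambda> (\<lambda>x. \<phi> x - tilt u x)"
proof -
  define f where "f x = (if x \<in> \<Lambda> then \<phi> x - tilt u x else 0)" for x
  define F where "F = (\<lambda>(x,y). (f x - f y)^2)"
  have Feq: "(\<lambda>(x,y). (glue \<Lambda> \<phi> (tilt u) x - glue \<Lambda> \<phi> (tilt u) y - zdot (x - y) u)^2) = F"
    by (auto simp: F_def f_def glue_def zdot_diff tilt_def fun_eq_iff algebra_simps power2_commute)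
  define S where "S = nnpairs \<Lambda> \<union> bp \<Lambda> \<union> prod.swap ` bp \<Lambda>"
  have finS: "finite S" using fin by (simp add: S_def finite_nnpairs finite_bp)
  have "grad_energy u (glue \<Lambda> \<phi> (tilt u)) = infsum F {(x,y). nbr x y}"
    unfolding grad_energy_def Feq ..
  also have "\<dots> = infsum F S"
  proof (rule infsum_cong_neutral)
    fix p assume p: "p \<in> {(x,y). nbr x y} - S"
    obtain x y where xy: "p = (x,y)" by (cases p)
    have "\<not> (x \<in> \<Lambda> \<or> y \<in> \<Lambda>)"
    proof
      assume "x \<in> \<Lambda> \<or> y \<in> \<Lambda>"
      moreover have "nbr x y" "(x,y) \<notin> S" using p xy by auto
      ultimately show False
        by (auto simp: S_def nnpairs_def bp_def image_iff nbr_sym intro: bdry_mem)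
    qed
    thus "F p = 0" by (simp add: xy F_def f_def)
  next
    fix p assume "p \<in> S - {(x,y). nbr x y}"
    thus "F p = 0" by (auto simp: S_def nnpairs_def bp_def nbr_sym)
  qed simp
  also have "\<dots> = sum F S" using finS by simp
  also have "\<dots> = sum F (nnpairs \<Lambda>) + sum F (bp \<Lambda>) + sum F (prod.swap ` bp \<Lambda>)"
  proof -
    have d1: "nnpairs \<Lambda> \<inter> bp \<Lambda> = {}" by (auto simp: nnpairs_def bp_def bdry_def)
    have d2: "(nnpairs \<Lambda> \<union> bp \<Lambda>) \<inter> prod.swap ` bp \<Lambda> = {}" by (auto simp: nnpairs_def bp_def bdry_def)
    have f1: "finite (nnpairs \<Lambda>)" "finite (bp \<Lambda>)" "finite (prod.swap ` bp \<Lambda>)"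
      using fin by (auto simp: finite_nnpairs finite_bp)
    show ?thesis unfolding S_def
      by (simp add: sum.union_disjoint[OF _ _ d2] sum.union_disjoint[OF _ _ d1] f1)
  qed
  also have "sum F (prod.swap ` bp \<Lambda>) = sum (F \<circ> prod.swap) (bp \<Lambda>)"
    by (rule sum.reindex) simp
  also have "sum (F \<circ> prod.swap) (bp \<Lambda>) = (\<Sum>(x,y)\<in>bp \<Lambda>. (\<phi> x - tilt u x)^2)"
    by (rule sum.cong) (auto simp: F_def f_def bp_def bdry_def power2_commute)
  also have "sum F (bp \<Lambda>) = (\<Sum>(x,y)\<in>bp \<Lambda>. (\<phi> x - tilt u x)^2)"
    by (rule sum.cong) (auto simp: F_def f_def bp_def bdry_def)
  also have "sum F (nnpairs \<Lambda>) = (\<Sum>(x,y)\<in>nnpairs \<Lambda>. ((\<phi> x - tilt u x) - (\<phi> y - tilt u y))^2)"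
    by (rule sum.cong) (auto simp: F_def f_def nnpairs_def)
  finally show ?thesis unfolding Qf_expand by simp
qed



lemma inn_split: "inn \<Lambda> \<xi> \<phi> = inn \<Lambda> \<xi> (\<lambda>x. \<phi> x - \<psi> x) + inn \<Lambda> \<xi> \<psi>"
  unfolding inn_def by (simp add: sum.distrib[symmetric] algebra_simps)

lemma ham_lower:
  fixes \<Lambda> :: "(int^'d) set"
  assumes lower: "\<forall>s. V s \<ge> A * s^2 - B"
  shows "hamiltonian V \<Lambda> \<psi> \<xi> \<phi> \<ge> A * Wf \<Lambda> \<psi> \<phi> - B * Ne \<Lambda> + 1/2 * inn \<Lambda> \<xi> \<phi>"
proof -
  have s1: "(\<Sum>(x,y)\<in>nnpairs \<Lambda>. A * (\<phi> x - \<phi> y)^2 - B) \<le> (\<Sum>(x,y)\<in>nnpairs \<Lambda>. V (\<phi> x - \<phi> y))"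
    by (rule sum_mono) (use lower in auto)
  have s2: "(\<Sum>(x,y)\<in>bp \<Lambda>. A * (\<phi> x - \<psi> y)^2 - B) \<le> (\<Sum>(x,y)\<in>bp \<Lambda>. V (\<phi> x - \<psi> y))"
    by (rule sum_mono) (use lower in auto)
  have e1: "(\<Sum>(x,y)\<in>nnpairs \<Lambda>. A * (\<phi> x - \<phi> y)^2 - B) = A * (\<Sum>(x,y)\<in>nnpairs \<Lambda>. (\<phi> x - \<phi> y)^2) - B * real (card (nnpairs \<Lambda>))"
    by (simp add: sum_subtractf sum_distrib_left case_prod_beta)
  have e2: "(\<Sum>(x,y)\<in>bp \<Lambda>. A * (\<phi> x - \<psi> y)^2 - B) = A * (\<Sum>(x,y)\<in>bp \<Lambda>. (\<phi> x - \<psi> y)^2) - B * real (card (bp \<Lambda>))"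
    by (simp add: sum_subtractf sum_distrib_left case_prod_beta)
  show ?thesis
    using s1 s2 unfolding e1 e2 hamiltonian_def Wf_def Ne_def inn_def bp_def[symmetric]
    by (simp add: algebra_simps)
qed

lemma ham_upper:
  fixes \<Lambda> :: "(int^'d) set"
  assumes up: "\<forall>s. V s \<le> V 0 + b * s^2"
  shows "hamiltonian V \<Lambda> \<psi> \<xi> \<phi> \<le> b * Wf \<Lambda> \<psi> \<phi> + V 0 * Ne \<Lambda> + 1/2 * inn \<Lambda> \<xi> \<phi>"
proof -
  have s1: "(\<Sum>(x,y)\<in>nnpairs \<Lambda>. V (\<phi> x - \<phi> y)) \<le> (\<Sum>(x,y)\<in>nnpairs \<Lambda>. V 0 + b * (\<phi> x - \<phi> y)^2)"
    by (rule sum_mono) (use up in auto)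
  have s2: "(\<Sum>(x,y)\<in>bp \<Lambda>. V (\<phi> x - \<psi> y)) \<le> (\<Sum>(x,y)\<in>bp \<Lambda>. V 0 + b * (\<phi> x - \<psi> y)^2)"
    by (rule sum_mono) (use up in auto)
  have e1: "(\<Sum>(x,y)\<in>nnpairs \<Lambda>. V 0 + b * (\<phi> x - \<phi> y)^2) = b * (\<Sum>(x,y)\<in>nnpairs \<Lambda>. (\<phi> x - \<phi> y)^2) + V 0 * real (card (nnpairs \<Lambda>))"
    by (simp add: sum.distrib sum_distrib_left case_prod_beta)
  have e2: "(\<Sum>(x,y)\<in>bp \<Lambda>. V 0 + b * (\<phi> x - \<psi> y)^2) = b * (\<Sum>(x,y)\<in>bp \<Lambda>. (\<phi> x - \<psi> y)^2) + V 0 * real (card (bp \<Lambda>))"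
    by (simp add: sum.distrib sum_distrib_left case_prod_beta)
  show ?thesis
    using s1 s2 unfolding e1 e2 hamiltonian_def Wf_def Ne_def inn_def bp_def[symmetric]
    by (simp add: algebra_simps)
qed

lemma meas_ham:
  fixes \<Lambda> :: "(int^'d) set"
  assumes fin: "finite \<Lambda>" and Vm: "V \<in> borel_measurable borel"
  shows "(\<lambda>\<phi>. hamiltonian V \<Lambda> \<psi> \<xi> \<phi>) \<in> borel_measurable (fieldM \<Lambda>)"
proof -
  have m1: "(\<lambda>\<phi>. \<Sum>(x,y)\<in>nnpairs \<Lambda>. V (\<phi> x - \<phi> y)) \<in> borel_measurable (fieldM \<Lambda>)"
  proof (rule meas_pairsum[OF finite_nnpairs[OF fin]])
    fix x y assume "(x,y) \<in> nnpairs \<Lambda>"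
    hence xy: "x \<in> \<Lambda>" "y \<in> \<Lambda>" by (auto simp: nnpairs_def)
    have "(\<lambda>\<phi>. \<phi> x - \<phi> y) \<in> borel_measurable (fieldM \<Lambda>)"
      using comp_meas[OF xy(1)] comp_meas[OF xy(2)] by measurable
    thus "(\<lambda>\<phi>. V (\<phi> x - \<phi> y)) \<in> borel_measurable (fieldM \<Lambda>)"
      using measurable_compose[OF _ Vm] by blast
  qed
  have m2: "(\<lambda>\<phi>. \<Sum>(x,y)\<in>bp \<Lambda>. V (\<phi> x - \<psi> y)) \<in> borel_measurable (fieldM \<Lambda>)"
  proof (rule meas_pairsum[OF finite_bp[OF fin]])
    fix x y assume "(x,y) \<in> bp \<Lambda>"
    hence xy: "x \<in> \<Lambda>" by (auto simp: bp_def)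
    have "(\<lambda>\<phi>. \<phi> x - \<psi> y) \<in> borel_measurable (fieldM \<Lambda>)"
      using comp_meas[OF xy(1)] by measurable
    thus "(\<lambda>\<phi>. V (\<phi> x - \<psi> y)) \<in> borel_measurable (fieldM \<Lambda>)"
      using measurable_compose[OF _ Vm] by blast
  qed
  have m3: "(\<lambda>\<phi>. inn \<Lambda> \<xi> (\<lambda>x. \<phi> x - 0)) \<in> borel_measurable (fieldM \<Lambda>)" by (rule meas_inn[OF fin])
  show ?thesis unfolding hamiltonian_def bp_def[symmetric]
    using m1 m2 m3 unfolding inn_def by simp
qed



lemma A_le_b:
  assumes lower: "\<forall>s. V s \<ge> A * s^2 - B" and up: "\<forall>s. V s \<le> V 0 + b * s^2"
  shows "A \<le> (b::real)"
proof (rule ccontr)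
  assume "\<not> A \<le> b"
  hence Ab: "A - b > 0" by simp
  have BV: "V 0 + B \<ge> 0" using lower[rule_format, of 0] by simp
  define s where "s = sqrt ((V 0 + B + 1) / (A - b))"
  have s2: "s^2 = (V 0 + B + 1) / (A - b)" unfolding s_def using Ab BV by simp
  have "A * s^2 - B \<le> V 0 + b * s^2" using lower up by (meson order_trans)
  hence "(A - b) * s^2 \<le> V 0 + B" by (simp add: algebra_simps)
  also have "(A - b) * s^2 = V 0 + B + 1" unfolding s2 using Ab by simp
  finally show False by simp
qed

lemma sigma_eq:
  fixes \<Lambda> :: "(int^'d) set"
  shows "sigma c \<Lambda> = - (1 / real (card \<Lambda>)) * ln (\<integral>\<phi>. exp (- c * Qf \<Lambda> \<phi>) \<partial>fieldM \<Lambda>)"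
proof -
  have "(\<lambda>\<phi>. exp (- (c/2) * (\<Sum>(x,y)\<in>nnpairs \<Lambda>. (\<phi> x - \<phi> y)^2) - c * (\<Sum>(x,y)\<in>{(x,y). x \<in> \<Lambda> \<and> y \<in> bdry \<Lambda> \<and> nbr x y}. (\<phi> x)^2)))
      = (\<lambda>\<phi>. exp (- c * Qf \<Lambda> \<phi>))"
    by (rule ext) (simp add: Qf_expand bp_def algebra_simps)
  thus ?thesis unfolding sigma_def by simp
qed

lemma ln_ratio_sigma:
  fixes \<Lambda> :: "(int^'d) set"
  assumes fin: "finite \<Lambda>" and a: "a > 0" and b: "b > 0"
  shows "ln (\<integral>\<phi>. exp (- a * Qf \<Lambda> \<phi>) \<partial>fieldM \<Lambda>) - ln (\<integral>\<phi>. exp (- b * Qf \<Lambda> \<phi>) \<partial>fieldM \<Lambda>)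
     = - real (card \<Lambda>) * (sigma a \<Lambda> - sigma b \<Lambda>)"
proof (cases "\<Lambda> = {}")
  case True
  have "Qf \<Lambda> \<phi> = 0" for \<phi> using True by (simp add: Qf_expand nnpairs_def bp_def)
  thus ?thesis using True by simp
next
  case False
  hence "real (card \<Lambda>) > 0" using fin by (simp add: card_gt_0_iff)
  thus ?thesis unfolding sigma_eq by (simp add: algebra_simps)
qed

lemma nn_bp_sub: "nnpairs \<Lambda> \<union> bp \<Lambda> \<union> prod.swap ` bp \<Lambda> \<subseteq> nnpairs (\<Lambda> \<union> bdry \<Lambda>)"
  by (auto simp: nnpairs_def bp_def nbr_sym)

lemma disj1: "nnpairs \<Lambda> \<inter> bp \<Lambda> = {}" by (auto simp: nnpairs_def bp_def bdry_def)
lemma disj2: "(nnpairs \<Lambda> \<union> bp \<Lambda>) \<inter> prod.swap ` bp \<Lambda> = {}" by (auto simp: nnpairs_def bp_def bdry_def)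

lemma Ne_bound:
  fixes \<Lambda> :: "(int^'d) set"
  assumes fin: "finite \<Lambda>"
  shows "Ne \<Lambda> \<le> real (card (nnpairs (\<Lambda> \<union> bdry \<Lambda>)))"
proof -
  have finP: "finite (nnpairs (\<Lambda> \<union> bdry \<Lambda>))" by (intro finite_nnpairs) (simp add: fin finite_bdry)
  have "card (nnpairs \<Lambda> \<union> bp \<Lambda>) = card (nnpairs \<Lambda>) + card (bp \<Lambda>)"
    using fin by (simp add: card_Un_disjoint disj1 finite_nnpairs finite_bp)
  moreover have "card (nnpairs \<Lambda> \<union> bp \<Lambda>) \<le> card (nnpairs (\<Lambda> \<union> bdry \<Lambda>))"
    by (rule card_mono[OF finP]) (use nn_bp_sub in blast)
  ultimately have "card (nnpairs \<Lambda>) + card (bp \<Lambda>) \<le> card (nnpairs (\<Lambda> \<union> bdry \<Lambda>))" by simp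
  hence "real (card (nnpairs \<Lambda>)) + real (card (bp \<Lambda>)) \<le> real (card (nnpairs (\<Lambda> \<union> bdry \<Lambda>)))" by linarith
  thus ?thesis unfolding Ne_def by simp
qed

lemma Tt_bound:
  fixes \<Lambda> :: "(int^'d) set"
  assumes fin: "finite \<Lambda>"
  shows "Tt \<Lambda> (tilt u) \<le> 1/2 * (\<Sum>(x,y)\<in>nnpairs (\<Lambda> \<union> bdry \<Lambda>). (zdot (x - y) u)^2)"
proof -
  let ?z = "\<lambda>(x,y). (zdot (x - y) u)^2"
  have finP: "finite (nnpairs (\<Lambda> \<union> bdry \<Lambda>))" by (intro finite_nnpairs) (simp add: fin finite_bdry)
  have f1: "finite (nnpairs \<Lambda>)" "finite (bp \<Lambda>)" "finite (prod.swap ` bp \<Lambda>)"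
    using fin by (auto simp: finite_nnpairs finite_bp)
  have "sum ?z (nnpairs \<Lambda> \<union> bp \<Lambda> \<union> prod.swap ` bp \<Lambda>) \<le> sum ?z (nnpairs (\<Lambda> \<union> bdry \<Lambda>))"
    by (rule sum_mono2[OF finP nn_bp_sub]) auto
  moreover have "sum ?z (nnpairs \<Lambda> \<union> bp \<Lambda> \<union> prod.swap ` bp \<Lambda>) = sum ?z (nnpairs \<Lambda>) + sum ?z (bp \<Lambda>) + sum ?z (prod.swap ` bp \<Lambda>)"
    by (simp add: sum.union_disjoint[OF _ _ disj2] sum.union_disjoint[OF _ _ disj1] f1)
  moreover have "sum ?z (prod.swap ` bp \<Lambda>) = sum ?z (bp \<Lambda>)"
  proof -
    have "sum ?z (prod.swap ` bp \<Lambda>) = sum (?z \<circ> prod.swap) (bp \<Lambda>)" by (rule sum.reindex) simp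
    also have "\<dots> = sum ?z (bp \<Lambda>)"
      by (rule sum.cong) (auto simp: zdot_diff power2_commute)
    finally show ?thesis .
  qed
  moreover have "Tt \<Lambda> (tilt u) = 1/2 * sum ?z (nnpairs \<Lambda>) + sum ?z (bp \<Lambda>)"
    unfolding Tt_def by (simp add: tilt_def zdot_diff case_prod_beta)
  ultimately show ?thesis by simp
qed

lemma Tt_nonneg: "Tt \<Lambda> \<psi> \<ge> 0"
  unfolding Tt_def by (intro add_nonneg_nonneg mult_nonneg_nonneg sum_nonneg) auto



theorem lemma3p3:
  fixes V V' V'' :: "real \<Rightarrow> real" and A B C2 :: real and u :: "real^'d"
  assumes d3: "CARD('d) \<ge> 3"
    and dV: "\<forall>s. (V has_real_derivative V' s) (at s)"
    and dV': "\<forall>s. (V' has_real_derivative V'' s) (at s)"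
    and contV'': "continuous_on UNIV V''"
    and even: "\<forall>s. V (- s) = V s"
    and Apos: "A > 0"
    and lower: "\<forall>s. V s \<ge> A * s^2 - B"
    and C2pos: "C2 > 0"
    and upper: "\<forall>s. V'' s \<le> C2"
  shows "\<exists>\<beta>0>0. \<forall>\<beta>. 0 < \<beta> \<and> \<beta> < \<beta>0 \<longrightarrow>
           (\<forall>\<Lambda>::(int^'d) set. finite \<Lambda> \<longrightarrow> (\<forall>\<xi>::int^'d \<Rightarrow> real.
              free_energy V \<beta> u \<Lambda> \<xi>
              \<le> - real (card \<Lambda>) * (sigma (A - \<beta>) \<Lambda> - sigma (C2 / 2) \<Lambda>)
                 + (\<Sum>(x,y)\<in>nnpairs (\<Lambda> \<union> bdry \<Lambda>). B + V 0)
                 - (A - \<beta> - C2 / 2) / 2 * (\<Sum>(x,y)\<in>nnpairs (\<Lambda> \<union> bdry \<Lambda>). (zdot (x - y) u)^2)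
                 + 1/2 * (1 / (A - \<beta>) - 2 / C2) * green_form \<Lambda> \<xi>))"
proof -
  have Vup: "\<forall>s. V s \<le> V 0 + C2/2 * s^2" using V_upper[OF dV dV' even upper] by blast
  have BV: "B + V 0 \<ge> 0" using lower[rule_format, of 0] by simp
  have Ab: "A \<le> C2/2" by (rule A_le_b[OF lower Vup])
  have Vm: "V \<in> borel_measurable borel"
  proof (rule borel_measurable_continuous_onI)
    show "continuous_on UNIV V"
      by (rule continuous_at_imp_continuous_on) (use dV DERIV_isCont in blast)
  qed
  show ?thesis
  proof (intro exI[of _ A] conjI allI impI Apos)
    fix \<beta> :: real and \<Lambda> :: "(int^'d) set" and \<xi> :: "int^'d \<Rightarrow> real"
    assume \<beta>: "0 < \<beta> \<and> \<beta> < A" and fin: "finite \<Lambda>"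
    define \<psi> where "\<psi> = tilt u"
    define a where "a = A - \<beta>"
    define b where "b = C2 / 2"
    have a: "a > 0" using \<beta> by (simp add: a_def)
    have b: "b > 0" using C2pos by (simp add: b_def)
    have ab: "a \<le> b" using Ab \<beta> by (simp add: a_def b_def)
    define D2 where "D2 = real (2 * CARD('d))"
    have D2: "D2 \<ge> 2" unfolding D2_def using card_gt_0_iff[of "UNIV::'d set"] by simp
    define G where "G = green_form \<Lambda> \<xi>"
    have G0: "G \<ge> 0" unfolding G_def by (rule green_form_nonneg[OF fin])
    define X where "X = inn \<Lambda> \<xi> \<psi>"
    define CU where "CU = B * Ne \<Lambda> - A * Tt \<Lambda> \<psi> - 1/2 * X"
    define CL where "CL = - V 0 * Ne \<Lambda> - b * Tt \<Lambda> \<psi> - 1/2 * X"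
    define num where "num = (\<lambda>\<phi>. exp (- hamiltonian V \<Lambda> (tilt u) \<xi> \<phi>) * exp (\<beta> / 2 * grad_energy u (glue \<Lambda> \<phi> (tilt u))))"
    define den where "den = (\<lambda>\<phi>. exp (- hamiltonian V \<Lambda> (tilt u) \<xi> \<phi>))"
    define g where "g c = (\<lambda>\<phi>. exp (- c * Qf \<Lambda> (\<lambda>x. \<phi> x - \<psi> x) - 1/2 * inn \<Lambda> \<xi> (\<lambda>x. \<phi> x - \<psi> x)))" for c
    define Z where "Z c = (\<integral>\<phi>. exp (- c * Qf \<Lambda> \<phi>) \<partial>fieldM \<Lambda>)" for c
    have gint: "integrable (fieldM \<Lambda>) (g c)" if "c > 0" for c
      unfolding g_def by (rule gauss_lin_shift(1)[OF fin that])
    have gval: "integral\<^sup>L (fieldM \<Lambda>) (g c) = exp (G / (16 * c * D2)) * Z c" if "c > 0" for c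
      unfolding g_def Z_def G_def D2_def by (rule gauss_lin_shift(2)[OF fin that])
    have Zpos: "Z c > 0" if "c > 0" for c
      unfolding Z_def by (rule integral_pos[OF fin gauss_integrable[OF fin that]]) simp
    have Hl: "hamiltonian V \<Lambda> \<psi> \<xi> \<phi> \<ge> A * (Qf \<Lambda> (\<lambda>x. \<phi> x - \<psi> x) + Tt \<Lambda> \<psi>) - B * Ne \<Lambda> + 1/2 * (inn \<Lambda> \<xi> (\<lambda>x. \<phi> x - \<psi> x) + X)" for \<phi>
      using ham_lower[OF lower, where \<Lambda>=\<Lambda> and \<psi>=\<psi> and \<xi>=\<xi> and \<phi>=\<phi>] unfolding \<psi>_def X_def Wf_decomp[OF fin]
      by (simp add: inn_split[where \<Lambda>=\<Lambda> and \<xi>=\<xi> and \<phi>=\<phi> and \<psi>="tilt u"])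
    have Hu: "hamiltonian V \<Lambda> \<psi> \<xi> \<phi> \<le> b * (Qf \<Lambda> (\<lambda>x. \<phi> x - \<psi> x) + Tt \<Lambda> \<psi>) + V 0 * Ne \<Lambda> + 1/2 * (inn \<Lambda> \<xi> (\<lambda>x. \<phi> x - \<psi> x) + X)" for \<phi>
      using ham_upper[OF Vup, where \<Lambda>=\<Lambda> and \<psi>=\<psi> and \<xi>=\<xi> and \<phi>=\<phi>] unfolding \<psi>_def X_def b_def Wf_decomp[OF fin]
      by (simp add: inn_split[where \<Lambda>=\<Lambda> and \<xi>=\<xi> and \<phi>=\<phi> and \<psi>="tilt u"])
    have num_eq: "num \<phi> = exp (- hamiltonian V \<Lambda> \<psi> \<xi> \<phi> + \<beta> * Qf \<Lambda> (\<lambda>x. \<phi> x - \<psi> x))" for \<phi>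
      unfolding num_def \<psi>_def grad_energy_eq[OF fin] by (simp add: exp_add[symmetric])
    have num_le: "num \<phi> \<le> exp CU * g a \<phi>" for \<phi>
    proof -
      have "- hamiltonian V \<Lambda> \<psi> \<xi> \<phi> + \<beta> * Qf \<Lambda> (\<lambda>x. \<phi> x - \<psi> x)
          \<le> CU + (- a * Qf \<Lambda> (\<lambda>x. \<phi> x - \<psi> x) - 1/2 * inn \<Lambda> \<xi> (\<lambda>x. \<phi> x - \<psi> x))"
        using Hl[of \<phi>] unfolding CU_def a_def by (simp add: algebra_simps)
      thus ?thesis unfolding num_eq g_def by (simp add: exp_add[symmetric])
    qed
    have den_le: "den \<phi> \<le> exp CU * g A \<phi>" for \<phi>
    proof -
      have "- hamiltonian V \<Lambda> \<psi> \<xi> \<phi> \<le> CU + (- A * Qf \<Lambda> (\<lambda>x. \<phi> x - \<psi> x) - 1/2 * inn \<Lambda> \<xi> (\<lambda>x. \<phi> x - \<psi> x))"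
        using Hl[of \<phi>] unfolding CU_def by (simp add: algebra_simps)
      thus ?thesis unfolding den_def g_def \<psi>_def[symmetric] by (simp add: exp_add[symmetric])
    qed
    have den_ge: "exp CL * g b \<phi> \<le> den \<phi>" for \<phi>
    proof -
      have "CL + (- b * Qf \<Lambda> (\<lambda>x. \<phi> x - \<psi> x) - 1/2 * inn \<Lambda> \<xi> (\<lambda>x. \<phi> x - \<psi> x)) \<le> - hamiltonian V \<Lambda> \<psi> \<xi> \<phi>"
        using Hu[of \<phi>] unfolding CL_def by (simp add: algebra_simps)
      thus ?thesis unfolding den_def g_def \<psi>_def[symmetric] by (simp add: exp_add[symmetric])
    qed
    have Hm: "(\<lambda>\<phi>. hamiltonian V \<Lambda> \<psi> \<xi> \<phi>) \<in> borel_measurable (fieldM \<Lambda>)" by (rule meas_ham[OF fin Vm])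
    have num_m: "num \<in> borel_measurable (fieldM \<Lambda>)"
    proof -
      have "num = (\<lambda>\<phi>. exp (- hamiltonian V \<Lambda> \<psi> \<xi> \<phi> + \<beta> * Qf \<Lambda> (\<lambda>x. \<phi> x - \<psi> x)))"
        using num_eq by auto
      thus ?thesis using Hm meas_Qf[OF fin, of \<psi>] by simp
    qed
    have den_m: "den \<in> borel_measurable (fieldM \<Lambda>)"
      unfolding den_def \<psi>_def[symmetric] using Hm by simp
    have num_int: "integrable (fieldM \<Lambda>) num"
    proof (rule Bochner_Integration.integrable_bound[OF integrable_mult_right[OF gint[OF a]] num_m])
      show "AE \<phi> in fieldM \<Lambda>. norm (num \<phi>) \<le> norm (exp CU * g a \<phi>)"
        using num_le by (simp add: num_def g_def)
    qed
    have den_int: "integrable (fieldM \<Lambda>) den"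
    proof (rule Bochner_Integration.integrable_bound[OF integrable_mult_right[OF gint[OF Apos]] den_m])
      show "AE \<phi> in fieldM \<Lambda>. norm (den \<phi>) \<le> norm (exp CU * g A \<phi>)"
        using den_le by (simp add: den_def g_def)
    qed
    define U where "U = exp CU * (exp (G / (16 * a * D2)) * Z a)"
    define L where "L = exp CL * (exp (G / (16 * b * D2)) * Z b)"
    have NU: "integral\<^sup>L (fieldM \<Lambda>) num \<le> U"
    proof -
      have "integral\<^sup>L (fieldM \<Lambda>) num \<le> (\<integral>\<phi>. exp CU * g a \<phi> \<partial>fieldM \<Lambda>)"
        by (rule integral_mono[OF num_int integrable_mult_right[OF gint[OF a]]]) (rule num_le)
      also have "\<dots> = U" unfolding U_def by (simp add: gval[OF a])
      finally show ?thesis .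
    qed
    have LD: "L \<le> integral\<^sup>L (fieldM \<Lambda>) den"
    proof -
      have "L = (\<integral>\<phi>. exp CL * g b \<phi> \<partial>fieldM \<Lambda>)" unfolding L_def by (simp add: gval[OF b])
      also have "\<dots> \<le> integral\<^sup>L (fieldM \<Lambda>) den"
        by (rule integral_mono[OF integrable_mult_right[OF gint[OF b]] den_int]) (rule den_ge)
      finally show ?thesis .
    qed
    have Lpos: "L > 0" unfolding L_def using Zpos[OF b] by simp
    have Upos: "U > 0" unfolding U_def using Zpos[OF a] by simp
    have Npos: "integral\<^sup>L (fieldM \<Lambda>) num > 0"
      by (rule integral_pos[OF fin num_int]) (simp add: num_def)
    have fe: "free_energy V \<beta> u \<Lambda> \<xi> = ln (integral\<^sup>L (fieldM \<Lambda>) num / integral\<^sup>L (fieldM \<Lambda>) den)"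
      unfolding free_energy_def num_def den_def ..
    have "integral\<^sup>L (fieldM \<Lambda>) num / integral\<^sup>L (fieldM \<Lambda>) den \<le> U / L"
      by (rule frac_le) (use NU LD Lpos Npos in auto)
    hence "free_energy V \<beta> u \<Lambda> \<xi> \<le> ln (U / L)"
      unfolding fe using Npos Lpos LD Upos by (subst ln_le_cancel_iff) auto
    also have "ln (U / L) = (CU + G / (16 * a * D2) + ln (Z a)) - (CL + G / (16 * b * D2) + ln (Z b))"
      unfolding U_def L_def using Zpos[OF a] Zpos[OF b]
      by (simp add: ln_div ln_mult)
    finally have F1: "free_energy V \<beta> u \<Lambda> \<xi> \<le> (CU + G / (16 * a * D2) + ln (Z a)) - (CL + G / (16 * b * D2) + ln (Z b))" .
    have F2: "ln (Z a) - ln (Z b) = - real (card \<Lambda>) * (sigma (A - \<beta>) \<Lambda> - sigma (C2 / 2) \<Lambda>)"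
      unfolding Z_def a_def[symmetric] b_def[symmetric] by (rule ln_ratio_sigma[OF fin a b])
    let ?P = "nnpairs (\<Lambda> \<union> bdry \<Lambda>)"
    have F3: "B * Ne \<Lambda> + V 0 * Ne \<Lambda> \<le> (\<Sum>(x,y)\<in>?P. B + V 0)"
    proof -
      have "(B + V 0) * Ne \<Lambda> \<le> (B + V 0) * real (card ?P)"
        by (rule mult_left_mono[OF Ne_bound[OF fin] BV])
      thus ?thesis by (simp add: algebra_simps)
    qed
    have F4: "b * Tt \<Lambda> \<psi> - A * Tt \<Lambda> \<psi> \<le> - (A - \<beta> - C2 / 2) / 2 * (\<Sum>(x,y)\<in>?P. (zdot (x - y) u)^2)"
    proof -
      have T0: "Tt \<Lambda> \<psi> \<ge> 0" by (rule Tt_nonneg)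
      have "b * Tt \<Lambda> \<psi> - A * Tt \<Lambda> \<psi> \<le> (b - a) * Tt \<Lambda> \<psi>"
        using T0 \<beta> by (simp add: a_def algebra_simps mult_right_mono)
      also have "\<dots> \<le> (b - a) * (1/2 * (\<Sum>(x,y)\<in>?P. (zdot (x - y) u)^2))"
        by (rule mult_left_mono) (use Tt_bound[OF fin, of u] ab in \<open>auto simp: \<psi>_def\<close>)
      finally show ?thesis by (simp add: a_def b_def algebra_simps)
    qed
    have F5: "G / (16 * a * D2) - G / (16 * b * D2) \<le> 1/2 * (1 / (A - \<beta>) - 2 / C2) * G"
    proof -
      have e: "G / (16 * a * D2) - G / (16 * b * D2) = (1/a - 1/b) * (G / (16 * D2))"
        using a b D2 by (simp add: field_simps)
      have ab': "1/a - 1/b \<ge> 0" using a ab by (simp add: divide_simps)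
      have "G * 1 \<le> G * (8 * D2)" by (rule mult_left_mono) (use G0 D2 in auto)
      hence "G / (16 * D2) \<le> G / 2" using G0 D2 by (simp add: divide_simps)
      hence "(1/a - 1/b) * (G / (16 * D2)) \<le> (1/a - 1/b) * (G / 2)" by (rule mult_left_mono[OF _ ab'])
      also have "(1/a - 1/b) * (G / 2) = 1/2 * (1 / (A - \<beta>) - 2 / C2) * G"
        unfolding a_def b_def by simp
      finally show ?thesis unfolding e .
    qed
    show "free_energy V \<beta> u \<Lambda> \<xi>
              \<le> - real (card \<Lambda>) * (sigma (A - \<beta>) \<Lambda> - sigma (C2 / 2) \<Lambda>)
                 + (\<Sum>(x,y)\<in>nnpairs (\<Lambda> \<union> bdry \<Lambda>). B + V 0)
                 - (A - \<beta> - C2 / 2) / 2 * (\<Sum>(x,y)\<in>nnpairs (\<Lambda> \<union> bdry \<Lambda>). (zdot (x - y) u)^2)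
                 + 1/2 * (1 / (A - \<beta>) - 2 / C2) * green_form \<Lambda> \<xi>"
      using F1 F2 F3 F4 F5 unfolding CU_def CL_def G_def[symmetric] by linarith
  qed
qed


end
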